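(* Let $\kappa\ge2$, and let $\psi^+$ be a rooted binary topological tree on a taxon set $X$ with $|X|\ge 2$. Let $\psi_A^+$ and $\psi_B^+$ be the rooted subtrees descending from the two children of the root, on taxon sets $A$ and $B$ respectively, so $X=A\sqcup B$ and $\psi^+=(\psi_A^+,\psi_B^+)$. Then $$c_\kappa(\psi^+)=c_\kappa(\psi_A^+)\,c_\kappa(\psi_B^+)-\binom{\kappa}{2}.$$
   Context: For a rooted binary topological tree $\psi^+$ on a taxon set $X$ and $\kappa\ge2$, consider real $|X|$-way $\kappa\times\cdots\times\kappa$ tensors $P$ with one index per taxon. For $Y\subseteq X$, $P_Y$ is the marginalization (sum over indices of taxa not in $Y$); $\psi^+|_Y$ is the induced rooted subtree; a 2-clade is a pair of leaves that are exactly the leaf descendants of some vertex. Let $L(\psi^+)\subseteq\mathbb R^{\kappa^{|X|}}$ be the linear space of all real tensors $P$ such that for every $Y\subseteq X$ and every 2-clade $\{a,b\}$ of $\psi^+|_Y$, $P_Y$ is invariant under exchanging the $a$ and $b$ indices, and let $c_\kappa(\psi^+)=\dim L(\psi^+)$. (Equivalently $c_\kappa(\psi^+)=d_\kappa(\psi^+)+1$, where $d_\kappa(\psi^+)$ is the dimension of the affine space of such tensors whose entries sum to 1, the affine closure of the UE model.) For a tree with a single leaf, $L$ is all of $\mathbb R^\kappa$, so $c_\kappa=\kappa$. *)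

theory Defs
  imports Complex_Main "HOL-Library.FuncSet" "HOL-Library.Function_Algebras"
begin

datatype 'a rtree = Leaf 'a | Node "'a rtree" "'a rtree"

fun leaves_list :: "'a rtree \<Rightarrow> 'a list" where
  "leaves_list (Leaf a) = [a]"
| "leaves_list (Node l r) = leaves_list l @ leaves_list r"

definition taxa :: "'a rtree \<Rightarrow> 'a set" where
  "taxa t = set (leaves_list t)"

definition wf_tree :: "'a rtree \<Rightarrow> bool" where
  "wf_tree t \<longleftrightarrow> distinct (leaves_list t)"

text \<open>Induced rooted subtree on Y (None if no leaf of the tree lies in Y);
  degree-2 vertices are suppressed.\<close>
fun restrict_tree :: "'a rtree \<Rightarrow> 'a set \<Rightarrow> 'a rtree option" where
  "restrict_tree (Leaf a) Y = (if a \<in> Y then Some (Leaf a) else None)"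
| "restrict_tree (Node l r) Y =
     (case (restrict_tree l Y, restrict_tree r Y) of
        (Some l', Some r') \<Rightarrow> Some (Node l' r')
      | (Some l', None) \<Rightarrow> Some l'
      | (None, Some r') \<Rightarrow> Some r'
      | (None, None) \<Rightarrow> None)"

fun subtrees :: "'a rtree \<Rightarrow> 'a rtree set" where
  "subtrees (Leaf a) = {Leaf a}"
| "subtrees (Node l r) = insert (Node l r) (subtrees l \<union> subtrees r)"

definition two_clade :: "'a rtree \<Rightarrow> 'a \<Rightarrow> 'a \<Rightarrow> bool" where
  "two_clade t a b \<longleftrightarrow> Node (Leaf a) (Leaf b) \<in> subtrees t \<or> Node (Leaf b) (Leaf a) \<in> subtrees t"

text \<open>Index set of a kappa x ... x kappa tensor with one index per taxon in X
  (states 0..kappa-1).\<close>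
definition indices :: "nat \<Rightarrow> 'a set \<Rightarrow> ('a \<Rightarrow> nat) set" where
  "indices \<kappa> X = PiE X (\<lambda>_. {..<\<kappa>})"

definition is_tensor :: "nat \<Rightarrow> 'a set \<Rightarrow> (('a \<Rightarrow> nat) \<Rightarrow> real) \<Rightarrow> bool" where
  "is_tensor \<kappa> X P \<longleftrightarrow> (\<forall>f. f \<notin> indices \<kappa> X \<longrightarrow> P f = 0)"

definition marg :: "nat \<Rightarrow> 'a set \<Rightarrow> 'a set \<Rightarrow> (('a \<Rightarrow> nat) \<Rightarrow> real) \<Rightarrow> ('a \<Rightarrow> nat) \<Rightarrow> real" where
  "marg \<kappa> X Y P f =
     (if f \<in> indices \<kappa> Y
      then (\<Sum>g\<in>indices \<kappa> (X - Y). P (\<lambda>x. if x \<in> Y then f x else g x))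
      else 0)"

definition swap_idx :: "'a \<Rightarrow> 'a \<Rightarrow> ('a \<Rightarrow> nat) \<Rightarrow> ('a \<Rightarrow> nat)" where
  "swap_idx a b f = f(a := f b, b := f a)"

definition Lspace :: "nat \<Rightarrow> 'a rtree \<Rightarrow> (('a \<Rightarrow> nat) \<Rightarrow> real) set" where
  "Lspace \<kappa> t = {P. is_tensor \<kappa> (taxa t) P \<and>
     (\<forall>Y t' a b. Y \<subseteq> taxa t \<longrightarrow> restrict_tree t Y = Some t' \<longrightarrow> two_clade t' a b \<longrightarrow>
        (\<forall>f. marg \<kappa> (taxa t) Y P f = marg \<kappa> (taxa t) Y P (swap_idx a b f)))}"

definition c_dim :: "nat \<Rightarrow> 'a rtree \<Rightarrow> nat" where
  "c_dim \<kappa> t = vector_space.dim (\<lambda>(c::real) (P::('a \<Rightarrow> nat) \<Rightarrow> real). (\<lambda>x. c * P x)) (Lspace \<kappa> t)"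

end

theory Submission
  imports Defs
begin


definition fsc :: "real \<Rightarrow> ('b \<Rightarrow> real) \<Rightarrow> ('b \<Rightarrow> real)" where "fsc c P = (\<lambda>x. c * P x)"
interpretation V: vector_space fsc
  by unfold_locales (auto simp: fsc_def fun_eq_iff algebra_simps)
lemma c_dim_V: "c_dim \<kappa> t = V.dim (Lspace \<kappa> t)"
  unfolding c_dim_def fsc_def[abs_def] ..

definition mrg :: "'a set \<Rightarrow> ('a \<Rightarrow> nat) \<Rightarrow> ('a \<Rightarrow> nat) \<Rightarrow> ('a \<Rightarrow> nat)" where
  "mrg Y f g = (\<lambda>x. if x \<in> Y then f x else g x)"

lemma indices_finite: "finite S \<Longrightarrow> finite (indices \<kappa> S)"
  unfolding indices_def by (simp add: finite_PiE)

lemma mrg_in: "A \<inter> B = {} \<Longrightarrow> g \<in> indices \<kappa> A \<Longrightarrow> h \<in> indices \<kappa> B \<Longrightarrow> mrg A g h \<in> indices \<kappa> (A \<union> B)"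
  unfolding indices_def mrg_def by (auto simp: PiE_iff extensional_def)

lemma restrict_mrg_A: "g \<in> indices \<kappa> A \<Longrightarrow> restrict (mrg A g h) A = g"
  unfolding indices_def mrg_def by (auto simp: fun_eq_iff PiE_iff extensional_def restrict_def)

lemma restrict_mrg_B: "A \<inter> B = {} \<Longrightarrow> h \<in> indices \<kappa> B \<Longrightarrow> restrict (mrg A g h) B = h"
  unfolding indices_def mrg_def by (auto simp: fun_eq_iff PiE_iff extensional_def restrict_def)

lemma mrg_restrict: "f \<in> indices \<kappa> (A \<union> B) \<Longrightarrow> mrg A (restrict f A) (restrict f B) = f"
  unfolding indices_def mrg_def by (auto simp: fun_eq_iff PiE_iff extensional_def restrict_def)

lemma restrict_in: "f \<in> indices \<kappa> X \<Longrightarrow> Y \<subseteq> X \<Longrightarrow> restrict f Y \<in> indices \<kappa> Y"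
  unfolding indices_def by (auto simp: PiE_iff)

lemma mrg_comm: "A \<inter> B = {} \<Longrightarrow> g \<in> indices \<kappa> A \<Longrightarrow> h \<in> indices \<kappa> B \<Longrightarrow> mrg B h g = mrg A g h"
  unfolding indices_def mrg_def by (auto simp: fun_eq_iff PiE_iff extensional_def)

lemma marg_alt:
  assumes "finite X" "Y \<subseteq> X" "f \<in> indices \<kappa> Y"
  shows "marg \<kappa> X Y P f = (\<Sum>F\<in>indices \<kappa> X. if restrict F Y = f then P F else 0)"
proof -
  have XY: "Y \<union> (X - Y) = X" using assms by auto
  have bij: "bij_betw (mrg Y f) (indices \<kappa> (X - Y)) {F \<in> indices \<kappa> X. restrict F Y = f}"
  proof (rule bij_betw_byWitness[where f'="\<lambda>F. restrict F (X - Y)"])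
    show "\<forall>a\<in>indices \<kappa> (X - Y). restrict (mrg Y f a) (X - Y) = a"
      unfolding indices_def mrg_def by (auto simp: fun_eq_iff PiE_iff extensional_def restrict_def)
    show "\<forall>a'\<in>{F \<in> indices \<kappa> X. restrict F Y = f}. mrg Y f (restrict a' (X - Y)) = a'"
      unfolding indices_def mrg_def by (auto simp: fun_eq_iff PiE_iff extensional_def restrict_def split: if_splits)
    show "mrg Y f ` indices \<kappa> (X - Y) \<subseteq> {F \<in> indices \<kappa> X. restrict F Y = f}"
      using mrg_in[of Y "X - Y" f \<kappa>] XY restrict_mrg_A[of f \<kappa> Y] assms(3) by auto
    show "(\<lambda>F. restrict F (X - Y)) ` {F \<in> indices \<kappa> X. restrict F Y = f} \<subseteq> indices \<kappa> (X - Y)"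
      using restrict_in by blast
  qed
  have "marg \<kappa> X Y P f = (\<Sum>g\<in>indices \<kappa> (X - Y). P (mrg Y f g))"
    using assms by (simp add: marg_def mrg_def)
  also have "\<dots> = (\<Sum>F\<in>{F \<in> indices \<kappa> X. restrict F Y = f}. P F)"
    using bij by (rule sum.reindex_bij_betw)
  also have "\<dots> = (\<Sum>F\<in>indices \<kappa> X. if restrict F Y = f then P F else 0)"
    using assms(1) by (simp add: sum.inter_filter indices_finite)
  finally show ?thesis .
qed

lemma sum_split:
  assumes "A \<inter> B = {}" "finite A" "finite B"
  shows "(\<Sum>F\<in>indices \<kappa> (A \<union> B). G F) = (\<Sum>h\<in>indices \<kappa> B. \<Sum>g\<in>indices \<kappa> A. G (mrg A g h))"
proof -
  have bij: "bij_betw (\<lambda>(g,h). mrg A g h) (indices \<kappa> A \<times> indices \<kappa> B) (indices \<kappa> (A \<union> B))"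
  proof (rule bij_betw_byWitness[where f'="\<lambda>F. (restrict F A, restrict F B)"])
    show "\<forall>a\<in>indices \<kappa> A \<times> indices \<kappa> B. (restrict (case a of (g, h) \<Rightarrow> mrg A g h) A, restrict (case a of (g, h) \<Rightarrow> mrg A g h) B) = a"
      by (clarsimp simp: restrict_mrg_A restrict_mrg_B assms(1))
    show "\<forall>a'\<in>indices \<kappa> (A \<union> B). (case (restrict a' A, restrict a' B) of (g, h) \<Rightarrow> mrg A g h) = a'"
      by (simp add: mrg_restrict)
    show "(\<lambda>(g, h). mrg A g h) ` (indices \<kappa> A \<times> indices \<kappa> B) \<subseteq> indices \<kappa> (A \<union> B)"
      using mrg_in[OF assms(1)] by auto
    show "(\<lambda>F. (restrict F A, restrict F B)) ` indices \<kappa> (A \<union> B) \<subseteq> indices \<kappa> A \<times> indices \<kappa> B"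
      by (auto intro: restrict_in)
  qed
  have "(\<Sum>F\<in>indices \<kappa> (A \<union> B). G F) = (\<Sum>x\<in>indices \<kappa> A \<times> indices \<kappa> B. G (case x of (g,h) \<Rightarrow> mrg A g h))"
    using sum.reindex_bij_betw[OF bij, of G] by simp
  also have "\<dots> = (\<Sum>g\<in>indices \<kappa> A. \<Sum>h\<in>indices \<kappa> B. G (mrg A g h))"
    by (subst sum.cartesian_product) (simp add: split_def)
  also have "\<dots> = (\<Sum>h\<in>indices \<kappa> B. \<Sum>g\<in>indices \<kappa> A. G (mrg A g h))"
    by (rule sum.swap)
  finally show ?thesis .
qed

lemma swap_swap: "swap_idx a b (swap_idx a b f) = f"
  unfolding swap_idx_def by (auto simp: fun_eq_iff)
lemma swap_comm: "swap_idx a b = swap_idx b a"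
  unfolding swap_idx_def by (auto simp: fun_eq_iff)
lemma swap_in_imp: "a \<in> Y \<Longrightarrow> b \<in> Y \<Longrightarrow> f \<in> indices \<kappa> Y \<Longrightarrow> swap_idx a b f \<in> indices \<kappa> Y"
  unfolding swap_idx_def indices_def by (auto simp: PiE_iff extensional_def)
lemma swap_in: "a \<in> Y \<Longrightarrow> b \<in> Y \<Longrightarrow> swap_idx a b f \<in> indices \<kappa> Y \<longleftrightarrow> f \<in> indices \<kappa> Y"
  by (metis swap_in_imp swap_swap)
lemma mrg_swap: "a \<in> Y \<Longrightarrow> b \<in> Y \<Longrightarrow> mrg Y (swap_idx a b f) g = swap_idx a b (mrg Y f g)"
  unfolding mrg_def swap_idx_def by (auto simp: fun_eq_iff)

lemma marg_swap:
  assumes "a \<in> Y" "b \<in> Y" "\<And>F. Q (swap_idx a b F) = Q F"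
  shows "marg \<kappa> Z Y Q (swap_idx a b f) = marg \<kappa> Z Y Q f"
  using assms unfolding marg_def by (simp add: swap_in mrg_swap[unfolded mrg_def])

lemma marg_trans:
  assumes "finite X" "Y \<subseteq> Z" "Z \<subseteq> X"
  shows "marg \<kappa> X Y P = marg \<kappa> Z Y (marg \<kappa> X Z P)"
proof (rule ext)
  fix f
  show "marg \<kappa> X Y P f = marg \<kappa> Z Y (marg \<kappa> X Z P) f"
  proof (cases "f \<in> indices \<kappa> Y")
    case False thus ?thesis by (simp add: marg_def)
  next
    case True
    have fZ: "finite Z" using assms finite_subset by blast
    have "marg \<kappa> Z Y (marg \<kappa> X Z P) f = (\<Sum>G\<in>indices \<kappa> Z. if restrict G Y = f then marg \<kappa> X Z P G else 0)"
      using marg_alt[OF fZ assms(2) True] .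
    also have "\<dots> = (\<Sum>G\<in>indices \<kappa> Z. if restrict G Y = f then (\<Sum>F\<in>indices \<kappa> X. if restrict F Z = G then P F else 0) else 0)"
      by (intro sum.cong refl) (simp add: marg_alt[OF assms(1) assms(3)])
    also have "\<dots> = (\<Sum>G\<in>indices \<kappa> Z. \<Sum>F\<in>indices \<kappa> X. if restrict F Z = G \<and> restrict G Y = f then P F else 0)"
      by (intro sum.cong refl) auto
    also have "\<dots> = (\<Sum>F\<in>indices \<kappa> X. \<Sum>G\<in>indices \<kappa> Z. if restrict F Z = G \<and> restrict G Y = f then P F else 0)"
      by (rule sum.swap)
    also have "\<dots> = (\<Sum>F\<in>indices \<kappa> X. if restrict F Y = f then P F else 0)"
    proof (intro sum.cong refl)
      fix F assume F: "F \<in> indices \<kappa> X"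
      have rz: "restrict F Z \<in> indices \<kappa> Z" using restrict_in F assms(3) by blast
      have ry: "restrict (restrict F Z) Y = restrict F Y" using assms(2) by (auto simp: fun_eq_iff restrict_def)
      have eq: "(\<Sum>G\<in>indices \<kappa> Z. if restrict F Z = G \<and> restrict G Y = f then P F else 0)
          = (\<Sum>G\<in>indices \<kappa> Z. if G = restrict F Z then (if restrict G Y = f then P F else 0) else 0)"
        by (intro sum.cong refl) auto
      show "(\<Sum>G\<in>indices \<kappa> Z. if restrict F Z = G \<and> restrict G Y = f then P F else 0) = (if restrict F Y = f then P F else 0)"
        unfolding eq using rz ry fZ by (simp add: indices_finite)
    qed
    also have "\<dots> = marg \<kappa> X Y P f"
      using marg_alt[OF assms(1) _ True] assms by simp
    finally show ?thesis ..
  qed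
qed

lemma marg_add: "marg \<kappa> X Y (P + Q) = marg \<kappa> X Y P + marg \<kappa> X Y Q"
  by (auto simp: fun_eq_iff marg_def sum.distrib)
lemma marg_fsc: "marg \<kappa> X Y (fsc c P) = fsc c (marg \<kappa> X Y P)"
  by (auto simp: fun_eq_iff marg_def fsc_def sum_distrib_left)
lemma marg_zero: "marg \<kappa> X Y 0 = 0" by (auto simp: fun_eq_iff marg_def)

lemma L_tensor: "P \<in> Lspace \<kappa> t \<Longrightarrow> f \<notin> indices \<kappa> (taxa t) \<Longrightarrow> P f = 0"
  unfolding Lspace_def is_tensor_def by blast
lemma L_cond:
  assumes "P \<in> Lspace \<kappa> t" "Y \<subseteq> taxa t" "restrict_tree t Y = Some t'" "two_clade t' a b"
  shows "marg \<kappa> (taxa t) Y P (swap_idx a b f) = marg \<kappa> (taxa t) Y P f"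
proof -
  have "\<forall>Y t' a b. Y \<subseteq> taxa t \<longrightarrow> restrict_tree t Y = Some t' \<longrightarrow> two_clade t' a b \<longrightarrow>
     (\<forall>f. marg \<kappa> (taxa t) Y P f = marg \<kappa> (taxa t) Y P (swap_idx a b f))"
    using assms(1) unfolding Lspace_def by blast
  from this[rule_format, OF assms(2) assms(3) assms(4)] show ?thesis by (rule sym)
qed
lemma L_intro:
  assumes "\<And>f. f \<notin> indices \<kappa> (taxa t) \<Longrightarrow> P f = 0"
    and "\<And>Y t' a b f. Y \<subseteq> taxa t \<Longrightarrow> restrict_tree t Y = Some t' \<Longrightarrow> two_clade t' a b \<Longrightarrow>
      marg \<kappa> (taxa t) Y P (swap_idx a b f) = marg \<kappa> (taxa t) Y P f"
  shows "P \<in> Lspace \<kappa> t"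
proof -
  have "is_tensor \<kappa> (taxa t) P" unfolding is_tensor_def using assms(1) by blast
  moreover have "\<forall>Y t' a b. Y \<subseteq> taxa t \<longrightarrow> restrict_tree t Y = Some t' \<longrightarrow> two_clade t' a b \<longrightarrow>
     (\<forall>f. marg \<kappa> (taxa t) Y P f = marg \<kappa> (taxa t) Y P (swap_idx a b f))"
    by (intro allI impI, rule sym, rule assms(2)) 
  ultimately show ?thesis unfolding Lspace_def by blast
qed

lemma Lspace_subspace: "V.subspace (Lspace \<kappa> t)"
proof (unfold V.subspace_def, intro conjI ballI allI)
  show "0 \<in> Lspace \<kappa> t" by (rule L_intro) (simp_all add: marg_zero)
next
  fix x y assume x: "x \<in> Lspace \<kappa> t" and y: "y \<in> Lspace \<kappa> t"
  show "x + y \<in> Lspace \<kappa> t"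
  proof (rule L_intro)
    fix f assume "f \<notin> indices \<kappa> (taxa t)" then show "(x + y) f = 0" using L_tensor[OF x] L_tensor[OF y] by simp
  next
    fix Y t' a b f assume h: "Y \<subseteq> taxa t" "restrict_tree t Y = Some t'" "two_clade t' a b"
    show "marg \<kappa> (taxa t) Y (x + y) (swap_idx a b f) = marg \<kappa> (taxa t) Y (x + y) f"
      using L_cond[OF x h] L_cond[OF y h] by (simp add: marg_add)
  qed
next
  fix c x assume x: "x \<in> Lspace \<kappa> t"
  show "fsc c x \<in> Lspace \<kappa> t"
  proof (rule L_intro)
    fix f assume "f \<notin> indices \<kappa> (taxa t)" then show "fsc c x f = 0" using L_tensor[OF x] by (simp add: fsc_def)
  next
    fix Y t' a b f assume h: "Y \<subseteq> taxa t" "restrict_tree t Y = Some t'" "two_clade t' a b"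
    show "marg \<kappa> (taxa t) Y (fsc c x) (swap_idx a b f) = marg \<kappa> (taxa t) Y (fsc c x) f"
      using L_cond[OF x h] unfolding marg_fsc by (simp add: fsc_def)
  qed
qed

lemma taxa_Leaf[simp]: "taxa (Leaf a) = {a}" by (simp add: taxa_def)
lemma taxa_Node[simp]: "taxa (Node l r) = taxa l \<union> taxa r" by (simp add: taxa_def)
lemma wf_Node: "wf_tree (Node l r) \<longleftrightarrow> wf_tree l \<and> wf_tree r \<and> taxa l \<inter> taxa r = {}"
  by (simp add: wf_tree_def taxa_def)
lemma taxa_finite: "finite (taxa t)" by (simp add: taxa_def)
lemma taxa_ne: "taxa t \<noteq> {}" by (induct t) auto

lemma restrict_None: "restrict_tree t Y = None \<longleftrightarrow> Y \<inter> taxa t = {}"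
  by (induct t) (auto split: option.splits)
lemma restrict_taxa: "restrict_tree t Y = Some t' \<Longrightarrow> taxa t' = Y \<inter> taxa t"
  by (induct t arbitrary: t') (auto split: option.splits if_splits simp: restrict_None)
lemma restrict_full: "taxa t \<subseteq> Y \<Longrightarrow> restrict_tree t Y = Some t"
  by (induct t) auto
lemma restrict_cong: "Y \<inter> taxa t = Z \<inter> taxa t \<Longrightarrow> restrict_tree t Y = restrict_tree t Z"
proof (induct t)
  case (Leaf x) thus ?case by auto
next
  case (Node l r)
  have "Y \<inter> taxa l = Z \<inter> taxa l" "Y \<inter> taxa r = Z \<inter> taxa r" using Node.prems by auto
  thus ?case using Node.hyps by simp
qed
lemma restrict_single: "wf_tree t \<Longrightarrow> Y \<inter> taxa t = {x} \<Longrightarrow> restrict_tree t Y = Some (Leaf x)"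
proof (induct t)
  case (Leaf a)
  then have eq: "Y \<inter> {a} = {x}" by simp
  have "x \<in> Y \<inter> {a}" unfolding eq by simp
  then have "a \<in> Y" "x = a" by blast+
  then show ?case by simp
next
  case (Node l r)
  have wl: "wf_tree l" "wf_tree r" "taxa l \<inter> taxa r = {}" using Node.prems(1) by (simp_all add: wf_Node)
  show ?case
  proof (cases "x \<in> taxa l")
    case True
    hence "Y \<inter> taxa l = {x}" "Y \<inter> taxa r = {}" using Node.prems(2) wl(3) by auto
    thus ?thesis using Node.hyps wl by (simp add: restrict_None[symmetric])
  next
    case False
    hence "Y \<inter> taxa r = {x}" "Y \<inter> taxa l = {}" using Node.prems(2) by auto
    thus ?thesis using Node.hyps wl by (simp add: restrict_None[symmetric])
  qed
qed

lemma two_clade_Node: "two_clade (Node l r) a b \<longleftrightarrow> (l = Leaf a \<and> r = Leaf b) \<or> (l = Leaf b \<and> r = Leaf a) \<or> two_clade l a b \<or> two_clade r a b"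
  unfolding two_clade_def by auto
lemma two_clade_Leaf: "\<not> two_clade (Leaf x) a b" unfolding two_clade_def by auto
lemma subtrees_taxa: "s \<in> subtrees t \<Longrightarrow> taxa s \<subseteq> taxa t" by (induct t) auto
lemma two_clade_taxa: "two_clade t a b \<Longrightarrow> a \<in> taxa t \<and> b \<in> taxa t"
  unfolding two_clade_def using subtrees_taxa by fastforce
lemma two_clade_sym: "two_clade t a b = two_clade t b a" unfolding two_clade_def by auto

lemma pair_clade: "wf_tree t \<Longrightarrow> a \<in> taxa t \<Longrightarrow> b \<in> taxa t \<Longrightarrow> a \<noteq> b \<Longrightarrow>
   \<exists>t'. restrict_tree t {a,b} = Some t' \<and> two_clade t' a b"
proof (induct t)
  case (Leaf x) thus ?case by auto
next
  case (Node l r)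
  have wl: "wf_tree l" "wf_tree r" "taxa l \<inter> taxa r = {}" using Node.prems(1) by (simp_all add: wf_Node)
  consider "a \<in> taxa l" "b \<in> taxa l" | "a \<in> taxa l" "b \<in> taxa r" | "a \<in> taxa r" "b \<in> taxa l" | "a \<in> taxa r" "b \<in> taxa r"
    using Node.prems by auto
  thus ?case
  proof cases
    case 1
    then obtain t' where "restrict_tree l {a,b} = Some t'" "two_clade t' a b" using Node.hyps(1) wl Node.prems by blast
    moreover have "restrict_tree r {a,b} = None" using 1 wl(3) by (auto simp: restrict_None)
    ultimately show ?thesis by simp
  next
    case 2
    have "restrict_tree l {a,b} = Some (Leaf a)" using 2 wl by (intro restrict_single) auto
    moreover have "restrict_tree r {a,b} = Some (Leaf b)" using 2 wl by (intro restrict_single) auto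
    ultimately show ?thesis by (simp add: two_clade_Node)
  next
    case 3
    have "restrict_tree l {a,b} = Some (Leaf b)" using 3 wl by (intro restrict_single) auto
    moreover have "restrict_tree r {a,b} = Some (Leaf a)" using 3 wl by (intro restrict_single) auto
    ultimately show ?thesis by (simp add: two_clade_Node)
  next
    case 4
    then obtain t' where "restrict_tree r {a,b} = Some t'" "two_clade t' a b" using Node.hyps(2) wl Node.prems by blast
    moreover have "restrict_tree l {a,b} = None" using 4 wl(3) by (auto simp: restrict_None)
    ultimately show ?thesis by simp
  qed
qed



definition slc :: "nat \<Rightarrow> 'a set \<Rightarrow> 'a set \<Rightarrow> (('a \<Rightarrow> nat) \<Rightarrow> real) \<Rightarrow> ('a \<Rightarrow> nat) \<Rightarrow> ('a \<Rightarrow> nat) \<Rightarrow> real" where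
  "slc \<kappa> A B P h = (\<lambda>g. if g \<in> indices \<kappa> A \<and> h \<in> indices \<kappa> B then P (mrg A g h) else 0)"

lemma slice_marg:
  assumes "A \<inter> B = {}" "Y \<subseteq> A" "f \<in> indices \<kappa> Y" "h \<in> indices \<kappa> B"
  shows "marg \<kappa> A Y (slc \<kappa> A B P h) f = marg \<kappa> (A \<union> B) (Y \<union> B) P (mrg Y f h)"
proof -
  have YB: "Y \<inter> B = {}" using assms by blast
  have m: "mrg Y f h \<in> indices \<kappa> (Y \<union> B)" using mrg_in[OF YB assms(3,4)] .
  have d: "A \<union> B - (Y \<union> B) = A - Y" using assms(1) by blast
  have YA: "Y \<union> (A - Y) = A" using assms(2) by blast
  have "marg \<kappa> A Y (slc \<kappa> A B P h) f = (\<Sum>g\<in>indices \<kappa> (A - Y). slc \<kappa> A B P h (mrg Y f g))"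
    using assms(3) by (simp add: marg_def mrg_def)
  also have "\<dots> = (\<Sum>g\<in>indices \<kappa> (A - Y). P (mrg (Y \<union> B) (mrg Y f h) g))"
  proof (intro sum.cong refl)
    fix g assume g: "g \<in> indices \<kappa> (A - Y)"
    have "mrg Y f g \<in> indices \<kappa> (Y \<union> (A - Y))" using mrg_in[of Y "A - Y" f \<kappa> g] assms(3) g by blast
    hence "mrg Y f g \<in> indices \<kappa> A" using YA by simp
    moreover have "mrg A (mrg Y f g) h = mrg (Y \<union> B) (mrg Y f h) g"
      using g assms unfolding mrg_def indices_def by (auto simp: fun_eq_iff PiE_iff extensional_def)
    ultimately show "slc \<kappa> A B P h (mrg Y f g) = P (mrg (Y \<union> B) (mrg Y f h) g)"
      using assms(4) by (simp add: slc_def)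
  qed
  also have "\<dots> = marg \<kappa> (A \<union> B) (Y \<union> B) P (mrg Y f h)"
    using m d by (simp add: marg_def mrg_def)
  finally show ?thesis .
qed

lemma slice_in_L:
  assumes wf: "wf_tree (Node tA tB)" and P: "P \<in> Lspace \<kappa> (Node tA tB)"
  shows "slc \<kappa> (taxa tA) (taxa tB) P h \<in> Lspace \<kappa> tA"
proof (rule L_intro)
  fix f assume "f \<notin> indices \<kappa> (taxa tA)" then show "slc \<kappa> (taxa tA) (taxa tB) P h f = 0" by (simp add: slc_def)
next
  let ?A = "taxa tA" and ?B = "taxa tB"
  have dj: "?A \<inter> ?B = {}" using wf by (simp add: wf_Node)
  fix Y t' a b f assume Y: "Y \<subseteq> ?A" and r: "restrict_tree tA Y = Some t'" and c: "two_clade t' a b"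
  have ab: "a \<in> Y" "b \<in> Y" using two_clade_taxa[OF c] restrict_taxa[OF r] by auto
  show "marg \<kappa> ?A Y (slc \<kappa> ?A ?B P h) (swap_idx a b f) = marg \<kappa> ?A Y (slc \<kappa> ?A ?B P h) f"
  proof (cases "h \<in> indices \<kappa> ?B \<and> f \<in> indices \<kappa> Y")
    case False
    then show ?thesis
      by (auto simp: slc_def marg_def swap_in[OF ab])
  next
    case True
    have r2: "restrict_tree (Node tA tB) (Y \<union> ?B) = Some (Node t' tB)"
    proof -
      have "restrict_tree tA (Y \<union> ?B) = restrict_tree tA Y" using dj Y by (intro restrict_cong) blast
      moreover have "restrict_tree tB (Y \<union> ?B) = Some tB" by (rule restrict_full) blast
      ultimately show ?thesis using r by simp
    qed
    have c2: "two_clade (Node t' tB) a b" using c by (simp add: two_clade_Node)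
    have sub: "Y \<union> ?B \<subseteq> taxa (Node tA tB)" using Y by auto
    have symP: "marg \<kappa> (?A \<union> ?B) (Y \<union> ?B) P (swap_idx a b F) = marg \<kappa> (?A \<union> ?B) (Y \<union> ?B) P F" for F
      using L_cond[OF P sub r2 c2] by simp
    have fs: "swap_idx a b f \<in> indices \<kappa> Y" using True swap_in[OF ab] by auto
    show ?thesis
      using symP[of "mrg Y f h"] slice_marg[OF dj Y True[THEN conjunct2] True[THEN conjunct1]] slice_marg[OF dj Y fs True[THEN conjunct1]]
      by (simp add: mrg_swap[OF ab])
  qed
qed

lemma restrict_clade_swap:
  "(\<exists>t'. restrict_tree (Node l r) Y = Some t' \<and> two_clade t' a b) \<longleftrightarrow> (\<exists>t'. restrict_tree (Node r l) Y = Some t' \<and> two_clade t' a b)"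
  by (auto split: option.splits simp: two_clade_Node)

lemma L_swap_sub: "Lspace \<kappa> (Node l r) \<subseteq> Lspace \<kappa> (Node r l)"
proof
  fix P assume P: "P \<in> Lspace \<kappa> (Node l r)"
  show "P \<in> Lspace \<kappa> (Node r l)"
  proof (rule L_intro)
    fix f assume "f \<notin> indices \<kappa> (taxa (Node r l))" then show "P f = 0" using L_tensor[OF P] by (simp add: Un_commute)
  next
    fix Y t' a b f assume Y: "Y \<subseteq> taxa (Node r l)" and rt: "restrict_tree (Node r l) Y = Some t'" and c: "two_clade t' a b"
    obtain t'' where t'': "restrict_tree (Node l r) Y = Some t''" "two_clade t'' a b"
      using restrict_clade_swap[of l r Y a b] rt c by blast
    have Y': "Y \<subseteq> taxa (Node l r)" using Y by auto
    show "marg \<kappa> (taxa (Node r l)) Y P (swap_idx a b f) = marg \<kappa> (taxa (Node r l)) Y P f"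
      using L_cond[OF P Y' t''] by (simp add: Un_commute)
  qed
qed

lemma L_swap: "Lspace \<kappa> (Node l r) = Lspace \<kappa> (Node r l)"
  using L_swap_sub by blast

lemma clade_side:
  assumes dj: "A \<inter> B = {}" and fA: "finite A" and fB: "finite B" and tA: "taxa tA = A"
    and sl: "\<And>h. slc \<kappa> A B P h \<in> Lspace \<kappa> tA"
    and Y: "Y \<subseteq> A \<union> B" and r: "restrict_tree tA Y = Some l'" and c: "two_clade l' a b"
  shows "marg \<kappa> (A \<union> B) Y P (swap_idx a b f) = marg \<kappa> (A \<union> B) Y P f"
proof -
  define YA where "YA = Y \<inter> A"
  define Z where "Z = YA \<union> B"
  have ab: "a \<in> YA" "b \<in> YA" using two_clade_taxa[OF c] restrict_taxa[OF r] tA by (auto simp: YA_def)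
  have rA: "restrict_tree tA YA = Some l'"
  proof -
    have "restrict_tree tA YA = restrict_tree tA Y" unfolding YA_def using tA by (intro restrict_cong) blast
    then show ?thesis using r by simp
  qed
  have YZ: "Y \<subseteq> Z" "Z \<subseteq> A \<union> B" using Y by (auto simp: Z_def YA_def)
  have YAA: "YA \<subseteq> A" by (simp add: YA_def)
  have YAt: "YA \<subseteq> taxa tA" using YAA tA by simp
  have symQ: "marg \<kappa> (A \<union> B) Z P (swap_idx a b F) = marg \<kappa> (A \<union> B) Z P F" for F
  proof (cases "F \<in> indices \<kappa> Z")
    case False
    have abZ: "a \<in> Z" "b \<in> Z" using ab by (auto simp: Z_def)
    have "swap_idx a b F \<notin> indices \<kappa> Z" using False swap_in[OF abZ] by auto
    then show ?thesis using False by (simp add: marg_def)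
  next
    case True
    define g where "g = restrict F YA"
    define h where "h = restrict F B"
    have g: "g \<in> indices \<kappa> YA" "h \<in> indices \<kappa> B"
      using True restrict_in[of F \<kappa> Z YA] restrict_in[of F \<kappa> Z B] unfolding g_def h_def Z_def by auto
    have F: "F = mrg YA g h" using mrg_restrict[of F \<kappa> YA B] True by (simp add: g_def h_def Z_def)
    have gs: "swap_idx a b g \<in> indices \<kappa> YA" using g(1) swap_in[OF ab] by auto
    have Lsl: "marg \<kappa> A YA (slc \<kappa> A B P h) (swap_idx a b g) = marg \<kappa> A YA (slc \<kappa> A B P h) g"
      using L_cond[OF sl[of h] YAt rA c] tA by simp
    have e1: "marg \<kappa> (A \<union> B) Z P F = marg \<kappa> A YA (slc \<kappa> A B P h) g"
      using slice_marg[OF dj YAA g(1) g(2), of P] F by (simp add: Z_def)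
    have e2: "marg \<kappa> (A \<union> B) Z P (swap_idx a b F) = marg \<kappa> A YA (slc \<kappa> A B P h) (swap_idx a b g)"
      using slice_marg[OF dj YAA gs g(2), of P] F mrg_swap[OF ab, of g h] by (simp add: Z_def)
    show ?thesis using e1 e2 Lsl by simp
  qed
  have ab': "a \<in> Y" "b \<in> Y" using ab by (auto simp: YA_def)
  have "marg \<kappa> (A \<union> B) Y P = marg \<kappa> Z Y (marg \<kappa> (A \<union> B) Z P)"
    using marg_trans[OF _ YZ] fA fB by simp
  then show ?thesis using marg_swap[where Q="marg \<kappa> (A \<union> B) Z P", OF ab' symQ] by simp
qed



definition m2 :: "nat \<Rightarrow> 'a set \<Rightarrow> (('a \<Rightarrow> nat) \<Rightarrow> real) \<Rightarrow> 'a \<Rightarrow> 'a \<Rightarrow> nat \<Rightarrow> nat \<Rightarrow> real" where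
  "m2 \<kappa> X P a b s t = (\<Sum>F\<in>indices \<kappa> X. if F a = s \<and> F b = t then P F else 0)"
definition m1 :: "nat \<Rightarrow> 'a set \<Rightarrow> (('a \<Rightarrow> nat) \<Rightarrow> real) \<Rightarrow> 'a \<Rightarrow> nat \<Rightarrow> real" where
  "m1 \<kappa> X P a s = (\<Sum>F\<in>indices \<kappa> X. if F a = s then P F else 0)"
definition pt :: "'a \<Rightarrow> 'a \<Rightarrow> nat \<Rightarrow> nat \<Rightarrow> 'a \<Rightarrow> nat" where
  "pt a b s t = (\<lambda>x. if x = a then s else if x = b then t else undefined)"

lemma pt_in: "s < \<kappa> \<Longrightarrow> t < \<kappa> \<Longrightarrow> pt a b s t \<in> indices \<kappa> {a,b}"
  unfolding pt_def indices_def by (auto simp: PiE_iff extensional_def)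

lemma marg_pt:
  assumes "finite X" "a \<in> X" "b \<in> X" "a \<noteq> b" "s < \<kappa>" "t < \<kappa>"
  shows "marg \<kappa> X {a,b} P (pt a b s t) = m2 \<kappa> X P a b s t"
proof -
  have "marg \<kappa> X {a,b} P (pt a b s t) = (\<Sum>F\<in>indices \<kappa> X. if restrict F {a,b} = pt a b s t then P F else 0)"
    using assms by (intro marg_alt) (auto intro: pt_in)
  also have "\<dots> = m2 \<kappa> X P a b s t" unfolding m2_def
  proof (intro sum.cong refl)
    fix F
    have "restrict F {a,b} = pt a b s t \<longleftrightarrow> F a = s \<and> F b = t"
    proof
      assume H: "restrict F {a,b} = pt a b s t"
      have "restrict F {a,b} a = pt a b s t a" "restrict F {a,b} b = pt a b s t b" using H by simp_all
      then show "F a = s \<and> F b = t" using assms(4) by (simp add: pt_def)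
    next
      assume "F a = s \<and> F b = t" then show "restrict F {a,b} = pt a b s t"
        using assms(4) by (auto simp: fun_eq_iff restrict_def pt_def)
    qed
    then show "(if restrict F {a,b} = pt a b s t then P F else 0) = (if F a = s \<and> F b = t then P F else 0)" by simp
  qed
  finally show ?thesis .
qed

lemma swap_pt: "a \<noteq> b \<Longrightarrow> swap_idx a b (pt a b s t) = pt a b t s"
  unfolding swap_idx_def pt_def by (auto simp: fun_eq_iff)

lemma pt_eta: "f \<in> indices \<kappa> {a,b} \<Longrightarrow> a \<noteq> b \<Longrightarrow> f = pt a b (f a) (f b) \<and> f a < \<kappa> \<and> f b < \<kappa>"
  unfolding pt_def indices_def by (auto simp: fun_eq_iff PiE_iff extensional_def)

lemma marg_pair:
  assumes "finite X" "a \<in> X" "b \<in> X" "a \<noteq> b"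
  shows "(\<forall>f. marg \<kappa> X {a,b} P (swap_idx a b f) = marg \<kappa> X {a,b} P f) \<longleftrightarrow>
         (\<forall>s<\<kappa>. \<forall>t<\<kappa>. m2 \<kappa> X P a b s t = m2 \<kappa> X P a b t s)"
proof
  assume H: "\<forall>f. marg \<kappa> X {a,b} P (swap_idx a b f) = marg \<kappa> X {a,b} P f"
  show "\<forall>s<\<kappa>. \<forall>t<\<kappa>. m2 \<kappa> X P a b s t = m2 \<kappa> X P a b t s"
  proof (intro allI impI)
    fix s t assume st: "s < \<kappa>" "t < \<kappa>"
    have "marg \<kappa> X {a,b} P (swap_idx a b (pt a b t s)) = marg \<kappa> X {a,b} P (pt a b t s)" using H by blast
    then show "m2 \<kappa> X P a b s t = m2 \<kappa> X P a b t s"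
      using marg_pt[OF assms st] marg_pt[OF assms st(2) st(1)] swap_pt[OF assms(4)] by simp
  qed
next
  assume H: "\<forall>s<\<kappa>. \<forall>t<\<kappa>. m2 \<kappa> X P a b s t = m2 \<kappa> X P a b t s"
  show "\<forall>f. marg \<kappa> X {a,b} P (swap_idx a b f) = marg \<kappa> X {a,b} P f"
  proof
    fix f
    show "marg \<kappa> X {a,b} P (swap_idx a b f) = marg \<kappa> X {a,b} P f"
    proof (cases "f \<in> indices \<kappa> {a,b}")
      case False
      have ab: "a \<in> {a,b}" "b \<in> {a,b}" by auto
      have "swap_idx a b f \<notin> indices \<kappa> {a,b}" using False swap_in[OF ab] by auto
      then show ?thesis using False by (simp add: marg_def)
    next
      case True
      note e = pt_eta[OF True assms(4)]
      define s where "s = f a"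
      define t where "t = f b"
      have f: "f = pt a b s t" and st: "s < \<kappa>" "t < \<kappa>" using e by (simp_all add: s_def t_def)
      show ?thesis unfolding f using swap_pt[OF assms(4)] marg_pt[OF assms st] marg_pt[OF assms st(2) st(1)] H st by simp
    qed
  qed
qed

lemma m2_comm: "m2 \<kappa> X P a b s t = m2 \<kappa> X P b a t s"
  unfolding m2_def by (simp add: conj_commute)

lemma m1_split:
  assumes "finite X" "c \<in> X"
  shows "m1 \<kappa> X P a s = (\<Sum>r<\<kappa>. m2 \<kappa> X P a c s r)"
proof -
  have "(\<Sum>r<\<kappa>. m2 \<kappa> X P a c s r) = (\<Sum>F\<in>indices \<kappa> X. \<Sum>r<\<kappa>. if F a = s \<and> F c = r then P F else 0)"
    unfolding m2_def by (rule sum.swap)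
  also have "\<dots> = m1 \<kappa> X P a s" unfolding m1_def
  proof (intro sum.cong refl)
    fix F assume F: "F \<in> indices \<kappa> X"
    have Fc: "F c < \<kappa>" using F assms(2) unfolding indices_def by auto
    have "(\<Sum>r<\<kappa>. if F a = s \<and> F c = r then P F else 0) = (\<Sum>r<\<kappa>. if F c = r then (if F a = s then P F else 0) else 0)"
      by (intro sum.cong refl) auto
    also have "\<dots> = (if F a = s then P F else 0)" using Fc by (simp add: sum.delta)
    finally show "(\<Sum>r<\<kappa>. if F a = s \<and> F c = r then P F else 0) = (if F a = s then P F else 0)" .
  qed
  finally show ?thesis by simp
qed

lemma m1_eq:
  assumes wf: "wf_tree t" and u: "u \<in> Lspace \<kappa> t" and a: "a \<in> taxa t" "a' \<in> taxa t" and s: "s < \<kappa>"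
  shows "m1 \<kappa> (taxa t) u a s = m1 \<kappa> (taxa t) u a' s"
proof (cases "a = a'")
  case False
  obtain t' where r: "restrict_tree t {a,a'} = Some t'" and c: "two_clade t' a a'"
    using pair_clade[OF wf a False] by blast
  have sub: "{a,a'} \<subseteq> taxa t" using a by auto
  have "\<forall>f. marg \<kappa> (taxa t) {a,a'} u (swap_idx a a' f) = marg \<kappa> (taxa t) {a,a'} u f"
    using L_cond[OF u sub r c] by blast
  then have sym: "\<forall>x<\<kappa>. \<forall>y<\<kappa>. m2 \<kappa> (taxa t) u a a' x y = m2 \<kappa> (taxa t) u a a' y x"
    using marg_pair[OF taxa_finite a False] by blast
  have "m1 \<kappa> (taxa t) u a s = (\<Sum>r<\<kappa>. m2 \<kappa> (taxa t) u a a' s r)"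
    by (rule m1_split[OF taxa_finite a(2)])
  also have "\<dots> = (\<Sum>r<\<kappa>. m2 \<kappa> (taxa t) u a a' r s)"
    using sym s by (intro sum.cong refl) auto
  also have "\<dots> = (\<Sum>r<\<kappa>. m2 \<kappa> (taxa t) u a' a s r)"
    by (simp add: m2_comm)
  also have "\<dots> = m1 \<kappa> (taxa t) u a' s"
    by (rule m1_split[OF taxa_finite a(1), symmetric])
  finally show ?thesis .
qed simp

lemma m2_slices:
  assumes dj: "A \<inter> B = {}" and fin: "finite A" "finite B" and ab: "a \<in> A" "b \<in> B"
  shows "m2 \<kappa> (A \<union> B) P a b s t = (\<Sum>h\<in>indices \<kappa> B. if h b = t then m1 \<kappa> A (slc \<kappa> A B P h) a s else 0)"
proof -
  have "m2 \<kappa> (A \<union> B) P a b s t = (\<Sum>h\<in>indices \<kappa> B. \<Sum>g\<in>indices \<kappa> A. if mrg A g h a = s \<and> mrg A g h b = t then P (mrg A g h) else 0)"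
    unfolding m2_def by (rule sum_split[OF dj fin])
  also have "\<dots> = (\<Sum>h\<in>indices \<kappa> B. if h b = t then m1 \<kappa> A (slc \<kappa> A B P h) a s else 0)"
  proof (intro sum.cong refl)
    fix h assume h: "h \<in> indices \<kappa> B"
    have ma: "mrg A g h a = g a" "mrg A g h b = h b" for g using ab dj by (auto simp: mrg_def)
    show "(\<Sum>g\<in>indices \<kappa> A. if mrg A g h a = s \<and> mrg A g h b = t then P (mrg A g h) else 0) =
          (if h b = t then m1 \<kappa> A (slc \<kappa> A B P h) a s else 0)"
    proof (cases "h b = t")
      case True
      have "(\<Sum>g\<in>indices \<kappa> A. if mrg A g h a = s \<and> mrg A g h b = t then P (mrg A g h) else 0)
          = (\<Sum>g\<in>indices \<kappa> A. if g a = s then P (mrg A g h) else 0)" using True by (simp add: ma)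
      also have "\<dots> = m1 \<kappa> A (slc \<kappa> A B P h) a s"
        unfolding m1_def slc_def using h by (intro sum.cong refl) auto
      finally show ?thesis using True by simp
    next
      case False
      then show ?thesis by (simp add: ma)
    qed
  qed
  finally show ?thesis .
qed


lemma root_transfer:
  assumes wf: "wf_tree (Node tA tB)"
    and slA: "\<And>h. slc \<kappa> (taxa tA) (taxa tB) P h \<in> Lspace \<kappa> tA"
    and slB: "\<And>g. slc \<kappa> (taxa tB) (taxa tA) P g \<in> Lspace \<kappa> tB"
    and a: "a \<in> taxa tA" "a0 \<in> taxa tA" and b: "b \<in> taxa tB" "b0 \<in> taxa tB" and st: "s < \<kappa>" "t < \<kappa>"
  shows "m2 \<kappa> (taxa tA \<union> taxa tB) P a b s t = m2 \<kappa> (taxa tA \<union> taxa tB) P a0 b0 s t"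
proof -
  have wl: "wf_tree tA" "wf_tree tB" "taxa tA \<inter> taxa tB = {}" using wf by (simp_all add: wf_Node)
  have dj': "taxa tB \<inter> taxa tA = {}" using wl(3) by blast
  have 1: "m2 \<kappa> (taxa tA \<union> taxa tB) P a b s t = m2 \<kappa> (taxa tA \<union> taxa tB) P a0 b s t"
    unfolding m2_slices[OF wl(3) taxa_finite taxa_finite a(1) b(1)] m2_slices[OF wl(3) taxa_finite taxa_finite a(2) b(1)]
    by (intro sum.cong refl) (metis m1_eq[OF wl(1) slA a st(1)])
  have 2: "m2 \<kappa> (taxa tA \<union> taxa tB) P a0 b s t = m2 \<kappa> (taxa tA \<union> taxa tB) P a0 b0 s t"
  proof -
    have "m2 \<kappa> (taxa tA \<union> taxa tB) P a0 b s t = m2 \<kappa> (taxa tB \<union> taxa tA) P b a0 t s"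
      by (subst m2_comm) (simp add: Un_commute)
    also have "\<dots> = m2 \<kappa> (taxa tB \<union> taxa tA) P b0 a0 t s"
      unfolding m2_slices[OF dj' taxa_finite taxa_finite b(1) a(2)] m2_slices[OF dj' taxa_finite taxa_finite b(2) a(2)]
      by (intro sum.cong refl) (metis m1_eq[OF wl(2) slB b st(2)])
    also have "\<dots> = m2 \<kappa> (taxa tA \<union> taxa tB) P a0 b0 s t"
      by (subst m2_comm) (simp add: Un_commute)
    finally show ?thesis .
  qed
  show ?thesis using 1 2 by simp
qed

lemma root_all:
  assumes wf: "wf_tree (Node tA tB)"
    and slA: "\<And>h. slc \<kappa> (taxa tA) (taxa tB) P h \<in> Lspace \<kappa> tA"
    and slB: "\<And>g. slc \<kappa> (taxa tB) (taxa tA) P g \<in> Lspace \<kappa> tB"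
    and a0: "a0 \<in> taxa tA" and b0: "b0 \<in> taxa tB"
    and R: "\<forall>s<\<kappa>. \<forall>t<\<kappa>. m2 \<kappa> (taxa tA \<union> taxa tB) P a0 b0 s t = m2 \<kappa> (taxa tA \<union> taxa tB) P a0 b0 t s"
    and a: "a \<in> taxa tA" and b: "b \<in> taxa tB"
  shows "marg \<kappa> (taxa tA \<union> taxa tB) {a,b} P (swap_idx a b f) = marg \<kappa> (taxa tA \<union> taxa tB) {a,b} P f"
proof -
  have wl: "wf_tree tA" "wf_tree tB" "taxa tA \<inter> taxa tB = {}" using wf by (simp_all add: wf_Node)
  have ne: "a \<noteq> b" using a b wl(3) by blast
  have S: "\<forall>s<\<kappa>. \<forall>t<\<kappa>. m2 \<kappa> (taxa tA \<union> taxa tB) P a b s t = m2 \<kappa> (taxa tA \<union> taxa tB) P a b t s"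
  proof (intro allI impI)
    fix s t assume st: "s < \<kappa>" "t < \<kappa>"
    have "m2 \<kappa> (taxa tA \<union> taxa tB) P a b s t = m2 \<kappa> (taxa tA \<union> taxa tB) P a0 b0 s t"
      by (rule root_transfer[OF wf slA slB a a0 b b0 st])
    also have "\<dots> = m2 \<kappa> (taxa tA \<union> taxa tB) P a0 b0 t s" using R st by blast
    also have "\<dots> = m2 \<kappa> (taxa tA \<union> taxa tB) P a b t s"
      by (rule root_transfer[OF wf slA slB a a0 b b0 st(2) st(1), symmetric])
    finally show "m2 \<kappa> (taxa tA \<union> taxa tB) P a b s t = m2 \<kappa> (taxa tA \<union> taxa tB) P a b t s" .
  qed
  have fin: "finite (taxa tA \<union> taxa tB)" by (simp add: taxa_finite)
  have "\<forall>f. marg \<kappa> (taxa tA \<union> taxa tB) {a,b} P (swap_idx a b f) = marg \<kappa> (taxa tA \<union> taxa tB) {a,b} P f"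
    using marg_pair[OF fin _ _ ne] a b S by blast
  then show ?thesis by blast
qed

lemma L_char:
  assumes wf: "wf_tree (Node tA tB)" and a0: "a0 \<in> taxa tA" and b0: "b0 \<in> taxa tB"
  shows "P \<in> Lspace \<kappa> (Node tA tB) \<longleftrightarrow>
    (is_tensor \<kappa> (taxa tA \<union> taxa tB) P \<and> (\<forall>h. slc \<kappa> (taxa tA) (taxa tB) P h \<in> Lspace \<kappa> tA) \<and>
    (\<forall>g. slc \<kappa> (taxa tB) (taxa tA) P g \<in> Lspace \<kappa> tB) \<and>
    (\<forall>s<\<kappa>. \<forall>t<\<kappa>. m2 \<kappa> (taxa tA \<union> taxa tB) P a0 b0 s t = m2 \<kappa> (taxa tA \<union> taxa tB) P a0 b0 t s))"
proof -
  have wl: "wf_tree tA" "wf_tree tB" "taxa tA \<inter> taxa tB = {}" using wf by (simp_all add: wf_Node)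
  have dj': "taxa tB \<inter> taxa tA = {}" using wl(3) by blast
  have wf': "wf_tree (Node tB tA)" using wl by (simp add: wf_Node dj')
  have fin: "finite (taxa tA \<union> taxa tB)" by (simp add: taxa_finite)
  show ?thesis
  proof
    assume P: "P \<in> Lspace \<kappa> (Node tA tB)"
    have P': "P \<in> Lspace \<kappa> (Node tB tA)" using P L_swap by blast
    have ne: "a0 \<noteq> b0" using a0 b0 wl(3) by blast
    have rA: "restrict_tree tA {a0,b0} = Some (Leaf a0)" using wl a0 b0 by (intro restrict_single) auto
    have rB: "restrict_tree tB {a0,b0} = Some (Leaf b0)" using wl a0 b0 by (intro restrict_single) auto
    have r: "restrict_tree (Node tA tB) {a0,b0} = Some (Node (Leaf a0) (Leaf b0))" using rA rB by simp
    have c: "two_clade (Node (Leaf a0) (Leaf b0)) a0 b0" by (simp add: two_clade_Node)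
    have sub: "{a0,b0} \<subseteq> taxa (Node tA tB)" using a0 b0 by auto
    have "\<forall>f. marg \<kappa> (taxa tA \<union> taxa tB) {a0,b0} P (swap_idx a0 b0 f) = marg \<kappa> (taxa tA \<union> taxa tB) {a0,b0} P f"
      using L_cond[OF P sub r c] by simp
    then have R: "\<forall>s<\<kappa>. \<forall>t<\<kappa>. m2 \<kappa> (taxa tA \<union> taxa tB) P a0 b0 s t = m2 \<kappa> (taxa tA \<union> taxa tB) P a0 b0 t s"
      using marg_pair[OF fin _ _ ne] a0 b0 by blast
    have T: "is_tensor \<kappa> (taxa tA \<union> taxa tB) P" unfolding is_tensor_def using L_tensor[OF P] by simp
    show "is_tensor \<kappa> (taxa tA \<union> taxa tB) P \<and> (\<forall>h. slc \<kappa> (taxa tA) (taxa tB) P h \<in> Lspace \<kappa> tA) \<and>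
    (\<forall>g. slc \<kappa> (taxa tB) (taxa tA) P g \<in> Lspace \<kappa> tB) \<and>
    (\<forall>s<\<kappa>. \<forall>t<\<kappa>. m2 \<kappa> (taxa tA \<union> taxa tB) P a0 b0 s t = m2 \<kappa> (taxa tA \<union> taxa tB) P a0 b0 t s)"
      using T R slice_in_L[OF wf P] slice_in_L[OF wf' P'] by blast
  next
    assume H: "is_tensor \<kappa> (taxa tA \<union> taxa tB) P \<and> (\<forall>h. slc \<kappa> (taxa tA) (taxa tB) P h \<in> Lspace \<kappa> tA) \<and>
    (\<forall>g. slc \<kappa> (taxa tB) (taxa tA) P g \<in> Lspace \<kappa> tB) \<and>
    (\<forall>s<\<kappa>. \<forall>t<\<kappa>. m2 \<kappa> (taxa tA \<union> taxa tB) P a0 b0 s t = m2 \<kappa> (taxa tA \<union> taxa tB) P a0 b0 t s)"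
    then have T: "is_tensor \<kappa> (taxa tA \<union> taxa tB) P"
      and slA: "\<And>h. slc \<kappa> (taxa tA) (taxa tB) P h \<in> Lspace \<kappa> tA"
      and slB: "\<And>g. slc \<kappa> (taxa tB) (taxa tA) P g \<in> Lspace \<kappa> tB"
      and R: "\<forall>s<\<kappa>. \<forall>t<\<kappa>. m2 \<kappa> (taxa tA \<union> taxa tB) P a0 b0 s t = m2 \<kappa> (taxa tA \<union> taxa tB) P a0 b0 t s"
      by blast+
    show "P \<in> Lspace \<kappa> (Node tA tB)"
    proof (rule L_intro)
      fix f assume "f \<notin> indices \<kappa> (taxa (Node tA tB))" then show "P f = 0" using T unfolding is_tensor_def by simp
    next
      fix Y t' a b f assume Y: "Y \<subseteq> taxa (Node tA tB)" and r: "restrict_tree (Node tA tB) Y = Some t'" and c: "two_clade t' a b"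
      have YX: "Y \<subseteq> taxa tA \<union> taxa tB" using Y by simp
      have YX': "Y \<subseteq> taxa tB \<union> taxa tA" using Y by auto
      have sideA: "marg \<kappa> (taxa tA \<union> taxa tB) Y P (swap_idx a b f) = marg \<kappa> (taxa tA \<union> taxa tB) Y P f"
        if "restrict_tree tA Y = Some l'" "two_clade l' a b" for l'
        using clade_side[OF wl(3) taxa_finite taxa_finite refl slA YX that] .
      have sideB: "marg \<kappa> (taxa tA \<union> taxa tB) Y P (swap_idx a b f) = marg \<kappa> (taxa tA \<union> taxa tB) Y P f"
        if "restrict_tree tB Y = Some r'" "two_clade r' a b" for r'
        using clade_side[OF dj' taxa_finite taxa_finite refl slB YX' that] by (simp add: Un_commute)
      have goal: "marg \<kappa> (taxa tA \<union> taxa tB) Y P (swap_idx a b f) = marg \<kappa> (taxa tA \<union> taxa tB) Y P f"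
      proof (cases "restrict_tree tA Y")
        case None
        show ?thesis
        proof (cases "restrict_tree tB Y")
          case None2: None
          then show ?thesis using r None by simp
        next
          case (Some r')
          then have "t' = r'" using r None by simp
          then show ?thesis using sideB[OF Some] c by simp
        qed
      next
        case SomeA: (Some l')
        show ?thesis
        proof (cases "restrict_tree tB Y")
          case None
          then have "t' = l'" using r SomeA by simp
          then show ?thesis using sideA[OF SomeA] c by simp
        next
          case SomeB: (Some r')
          then have tt: "t' = Node l' r'" using r SomeA by simp
          have tl: "taxa l' = Y \<inter> taxa tA" by (rule restrict_taxa[OF SomeA])
          have tr: "taxa r' = Y \<inter> taxa tB" by (rule restrict_taxa[OF SomeB])
          have Yeq: "Y = taxa l' \<union> taxa r'" using tl tr YX by blast
          from c[unfolded tt two_clade_Node] consider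
            "l' = Leaf a" "r' = Leaf b" | "l' = Leaf b" "r' = Leaf a" | "two_clade l' a b" | "two_clade r' a b" by blast
          then show ?thesis
          proof cases
            case 1
            then have Yab: "Y = {a,b}" and ab: "a \<in> taxa tA" "b \<in> taxa tB" using Yeq tl tr by auto
            show ?thesis unfolding Yab by (rule root_all[OF wf slA slB a0 b0 R ab])
          next
            case 2
            then have Yab: "Y = {b,a}" and ab: "b \<in> taxa tA" "a \<in> taxa tB" using Yeq tl tr by auto
            show ?thesis unfolding Yab swap_comm[of a b] by (rule root_all[OF wf slA slB a0 b0 R ab])
          next
            case 3 then show ?thesis using sideA[OF SomeA] by simp
          next
            case 4 then show ?thesis using sideB[OF SomeB] by simp
          qed
        qed
      qed
      then show "marg \<kappa> (taxa (Node tA tB)) Y P (swap_idx a b f) = marg \<kappa> (taxa (Node tA tB)) Y P f" by simp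
    qed
  qed
qed



lemma sum_app: "(\<Sum>i\<in>I. F i) x = (\<Sum>i\<in>I. F i x)"
  by (induct I rule: infinite_finite_induct) auto
lemma fsc_app[simp]: "fsc c P x = c * P x" by (simp add: fsc_def)
lemma minus_fun_app[simp]: "(f - g) x = f x - (g x :: real)" by (simp add: fun_diff_def)
lemma uminus_fun_app[simp]: "(- f) x = - (f x :: real)" by (simp add: fun_Compl_def)

definition ind :: "('a \<Rightarrow> nat) \<Rightarrow> ('a \<Rightarrow> nat) \<Rightarrow> real" where "ind p = (\<lambda>f. if f = p then 1 else 0)"

lemma tensor_decomp:
  assumes "is_tensor \<kappa> S P" "finite S"
  shows "P = (\<Sum>p\<in>indices \<kappa> S. fsc (P p) (ind p))"
proof (rule ext)
  fix f
  show "P f = (\<Sum>p\<in>indices \<kappa> S. fsc (P p) (ind p)) f"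
  proof (cases "f \<in> indices \<kappa> S")
    case True
    have "(\<Sum>p\<in>indices \<kappa> S. fsc (P p) (ind p)) f = (\<Sum>p\<in>indices \<kappa> S. if p = f then P p else 0)"
      unfolding sum_app by (intro sum.cong refl) (auto simp: ind_def)
    also have "\<dots> = P f" using True assms(2) by (simp add: indices_finite)
    finally show ?thesis ..
  next
    case False
    then have "P f = 0" using assms(1) unfolding is_tensor_def by blast
    moreover have "(\<Sum>p\<in>indices \<kappa> S. fsc (P p) (ind p)) f = 0"
      unfolding sum_app using False by (intro sum.neutral) (auto simp: ind_def)
    ultimately show ?thesis by simp
  qed
qed

lemma tensor_span: "is_tensor \<kappa> S P \<Longrightarrow> finite S \<Longrightarrow> P \<in> V.span (ind ` indices \<kappa> S)"
  apply (subst tensor_decomp, assumption+)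
  by (intro V.span_sum V.span_scale V.span_base) auto

lemma fin_basis:
  assumes "L \<subseteq> {P. is_tensor \<kappa> S P}" "finite S"
  obtains BL where "BL \<subseteq> L" "V.independent BL" "L \<subseteq> V.span BL" "card BL = V.dim L" "finite BL"
proof -
  obtain BL where h: "BL \<subseteq> L" "V.independent BL" "L \<subseteq> V.span BL" "card BL = V.dim L" by (rule V.basis_exists)
  have "BL \<subseteq> V.span (ind ` indices \<kappa> S)" using h(1) assms tensor_span by blast
  then have "finite BL" using V.independent_span_bound[of "ind ` indices \<kappa> S" BL] h(2) assms(2) by (simp add: indices_finite)
  then show ?thesis using h that by blast
qed

definition tp :: "nat \<Rightarrow> 'a set \<Rightarrow> 'a set \<Rightarrow> (('a\<Rightarrow>nat)\<Rightarrow>real) \<Rightarrow> (('a\<Rightarrow>nat)\<Rightarrow>real) \<Rightarrow> ('a\<Rightarrow>nat) \<Rightarrow> real" where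
  "tp \<kappa> A B p q = (\<lambda>f. if f \<in> indices \<kappa> (A \<union> B) then p (restrict f A) * q (restrict f B) else 0)"

lemma tp_mrg: "A \<inter> B = {} \<Longrightarrow> g \<in> indices \<kappa> A \<Longrightarrow> h \<in> indices \<kappa> B \<Longrightarrow> tp \<kappa> A B p q (mrg A g h) = p g * q h"
  by (simp add: tp_def mrg_in restrict_mrg_A restrict_mrg_B)

lemma slc_tp_A:
  assumes "A \<inter> B = {}" "is_tensor \<kappa> A p" "is_tensor \<kappa> B q"
  shows "slc \<kappa> A B (tp \<kappa> A B p q) h = fsc (q h) p"
proof (rule ext)
  fix g
  show "slc \<kappa> A B (tp \<kappa> A B p q) h g = fsc (q h) p g"
  proof (cases "g \<in> indices \<kappa> A \<and> h \<in> indices \<kappa> B")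
    case True then show ?thesis using assms(1) by (simp add: slc_def tp_mrg)
  next
    case False then show ?thesis using assms(2,3) unfolding is_tensor_def slc_def by auto
  qed
qed

lemma slc_tp_B:
  assumes "A \<inter> B = {}" "is_tensor \<kappa> A p" "is_tensor \<kappa> B q"
  shows "slc \<kappa> B A (tp \<kappa> A B p q) g = fsc (p g) q"
proof (rule ext)
  fix h
  show "slc \<kappa> B A (tp \<kappa> A B p q) g h = fsc (p g) q h"
  proof (cases "g \<in> indices \<kappa> A \<and> h \<in> indices \<kappa> B")
    case True
    then have "mrg B h g = mrg A g h" using mrg_comm[OF assms(1)] by blast
    then show ?thesis using True assms(1) by (simp add: slc_def tp_mrg)
  next
    case False then show ?thesis using assms(2,3) unfolding is_tensor_def slc_def by auto
  qed
qed

definition Mset :: "nat \<Rightarrow> 'a rtree \<Rightarrow> 'a rtree \<Rightarrow> (('a \<Rightarrow> nat) \<Rightarrow> real) set" where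
  "Mset \<kappa> tA tB = {P. is_tensor \<kappa> (taxa tA \<union> taxa tB) P \<and> (\<forall>h. slc \<kappa> (taxa tA) (taxa tB) P h \<in> Lspace \<kappa> tA)
     \<and> (\<forall>g. slc \<kappa> (taxa tB) (taxa tA) P g \<in> Lspace \<kappa> tB)}"

lemma slc_add: "slc \<kappa> A B (P + Q) h = slc \<kappa> A B P h + slc \<kappa> A B Q h" by (auto simp: slc_def fun_eq_iff)
lemma slc_fsc: "slc \<kappa> A B (fsc c P) h = fsc c (slc \<kappa> A B P h)" by (auto simp: slc_def fun_eq_iff)
lemma slc_zero: "slc \<kappa> A B 0 h = 0" by (auto simp: slc_def fun_eq_iff)

lemma Mset_subspace: "V.subspace (Mset \<kappa> tA tB)"
proof (unfold V.subspace_def, intro conjI ballI allI)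
  show "0 \<in> Mset \<kappa> tA tB" unfolding Mset_def is_tensor_def
    by (simp add: slc_zero V.subspace_0[OF Lspace_subspace])
next
  fix x y assume x: "x \<in> Mset \<kappa> tA tB" and y: "y \<in> Mset \<kappa> tA tB"
  then show "x + y \<in> Mset \<kappa> tA tB" unfolding Mset_def is_tensor_def
    by (simp add: slc_add V.subspace_add[OF Lspace_subspace])
next
  fix c x assume x: "x \<in> Mset \<kappa> tA tB"
  then show "fsc c x \<in> Mset \<kappa> tA tB" unfolding Mset_def is_tensor_def
    by (simp add: slc_fsc V.subspace_scale[OF Lspace_subspace])
qed

lemma family_indep:
  assumes fin: "finite I" and H: "\<And>c. (\<Sum>i\<in>I. fsc (c i) (v i)) = 0 \<Longrightarrow> \<forall>i\<in>I. c i = 0"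
  shows "inj_on v I" "V.independent (v ` I)" "card (v ` I) = card I"
proof -
  show inj: "inj_on v I"
  proof (rule inj_onI, rule ccontr)
    fix i j assume ij: "i \<in> I" "j \<in> I" "v i = v j" "i \<noteq> j"
    define c where "c = (\<lambda>k. if k = i then (1::real) else if k = j then -1 else 0)"
    have "(\<Sum>k\<in>I. fsc (c k) (v k)) = (\<Sum>k\<in>I. (if k = i then v i else 0) - (if k = j then v j else 0))"
    proof (intro sum.cong refl)
      fix k show "fsc (c k) (v k) = (if k = i then v i else 0) - (if k = j then v j else 0)"
        using ij(4) by (cases "k = i"; cases "k = j") (simp_all add: c_def fun_eq_iff)
    qed
    also have "\<dots> = v i - v j" using fin ij by (simp add: sum_subtractf)
    also have "\<dots> = 0" using ij by simp
    finally have "c i = 0" using H[of c] ij by blast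
    then show False by (simp add: c_def)
  qed
  show "V.independent (v ` I)"
  proof (rule V.independent_if_scalars_zero)
    show "finite (v ` I)" using fin by simp
    fix f x assume s: "(\<Sum>x\<in>v ` I. fsc (f x) x) = 0" and x: "x \<in> v ` I"
    have "(\<Sum>i\<in>I. fsc (f (v i)) (v i)) = 0" using s sum.reindex[OF inj, of "\<lambda>x. fsc (f x) x"] by simp
    then have "\<forall>i\<in>I. f (v i) = 0" by (rule H)
    then show "f x = 0" using x by blast
  qed
  show "card (v ` I) = card I" using card_image[OF inj] .
qed

lemma indep_union:
  assumes S: "V.independent S" and T: "V.independent T" and fS: "finite S" and fT: "finite T"
    and ST: "V.span S \<inter> V.span T \<subseteq> {0}"
  shows "V.independent (S \<union> T)" "S \<inter> T = {}"
proof -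
  show dj: "S \<inter> T = {}"
  proof (rule ccontr)
    assume "S \<inter> T \<noteq> {}"
    then obtain x where "x \<in> S" "x \<in> T" by blast
    then have "x = 0" using ST V.span_base[of x S] V.span_base[of x T] by blast
    then show False using \<open>x \<in> S\<close> S V.dependent_zero by blast
  qed
  show "V.independent (S \<union> T)"
  proof (rule V.independent_if_scalars_zero)
    show "finite (S \<union> T)" using fS fT by simp
    fix f x assume s: "(\<Sum>x\<in>S \<union> T. fsc (f x) x) = 0" and x: "x \<in> S \<union> T"
    have "(\<Sum>x\<in>S. fsc (f x) x) + (\<Sum>x\<in>T. fsc (f x) x) = 0" by (metis s sum.union_disjoint[OF fS fT dj])
    then have e: "(\<Sum>x\<in>S. fsc (f x) x) = - (\<Sum>x\<in>T. fsc (f x) x)" by (simp add: eq_neg_iff_add_eq_0)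
    have "(\<Sum>x\<in>S. fsc (f x) x) \<in> V.span S" by (intro V.span_sum V.span_scale V.span_base)
    moreover have "(\<Sum>x\<in>S. fsc (f x) x) \<in> V.span T" unfolding e by (intro V.span_neg V.span_sum V.span_scale V.span_base)
    ultimately have z1: "(\<Sum>x\<in>S. fsc (f x) x) = 0" using ST by blast
    then have z2: "(\<Sum>x\<in>T. fsc (f x) x) = 0" using e by simp
    show "f x = 0"
    proof (cases "x \<in> S")
      case True then show ?thesis using V.independentD[OF S fS subset_refl z1] by blast
    next
      case False then have "x \<in> T" using x by blast
      then show ?thesis using V.independentD[OF T fT subset_refl z2] by blast
    qed
  qed
qed



lemma tp_lin2: "tp \<kappa> A B u (\<Sum>w\<in>S. fsc (r w) w) = (\<Sum>w\<in>S. fsc (r w) (tp \<kappa> A B u w))"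
  by (rule ext) (simp add: tp_def sum_app sum_distrib_left sum_distrib_right mult_ac)

lemma slc_comm: "A \<inter> B = {} \<Longrightarrow> slc \<kappa> A B P h g = slc \<kappa> B A P g h"
  unfolding slc_def by (auto simp: mrg_comm)

lemma ind_tensor: "p \<in> indices \<kappa> S \<Longrightarrow> is_tensor \<kappa> S (ind p)"
  unfolding is_tensor_def ind_def by auto

lemma tp_tensor: "is_tensor \<kappa> (A \<union> B) (tp \<kappa> A B p q)"
  unfolding is_tensor_def tp_def by auto

lemma prod_coeff:
  assumes dj: "A \<inter> B = {}" and fA: "finite A" and fB: "finite B"
    and BU: "V.independent BU" "finite BU" "BU \<subseteq> {P. is_tensor \<kappa> A P}"
    and BW: "V.independent BW" "finite BW" "BW \<subseteq> {P. is_tensor \<kappa> B P}"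
    and S: "(\<Sum>x\<in>BU \<times> BW. fsc (c x) (tp \<kappa> A B (fst x) (snd x))) = 0"
  shows "\<forall>x\<in>BU \<times> BW. c x = 0"
proof
  fix x assume x: "x \<in> BU \<times> BW"
  define d where "d u h = (\<Sum>w\<in>BW. c (u,w) * w h)" for u h
  have dz: "(\<Sum>u\<in>BU. fsc (d u h) u) = 0" for h
  proof (rule ext)
    fix g
    show "(\<Sum>u\<in>BU. fsc (d u h) u) g = 0 g"
    proof (cases "g \<in> indices \<kappa> A \<and> h \<in> indices \<kappa> B")
      case True
      have "(\<Sum>u\<in>BU. fsc (d u h) u) g = (\<Sum>u\<in>BU. \<Sum>w\<in>BW. c (u,w) * (u g * w h))"
        unfolding sum_app d_def by (simp add: sum_distrib_left sum_distrib_right mult_ac)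
      also have "\<dots> = (\<Sum>x\<in>BU \<times> BW. c x * (fst x g * snd x h))"
        by (simp add: sum.cartesian_product split_def)
      also have "\<dots> = (\<Sum>x\<in>BU \<times> BW. fsc (c x) (tp \<kappa> A B (fst x) (snd x))) (mrg A g h)"
        unfolding sum_app using True dj by (simp add: tp_mrg)
      also have "\<dots> = 0" using S by simp
      finally show ?thesis by simp
    next
      case False
      then have "g \<notin> indices \<kappa> A \<or> h \<notin> indices \<kappa> B" by blast
      then show ?thesis
      proof
        assume g: "g \<notin> indices \<kappa> A"
        have "\<forall>u\<in>BU. fsc (d u h) u g = 0" using BU(3) g unfolding is_tensor_def by auto
        then show ?thesis unfolding sum_app by (simp add: sum.neutral)
      next
        assume h: "h \<notin> indices \<kappa> B"
        have "\<forall>w\<in>BW. c (u,w) * w h = 0" for u using BW(3) h unfolding is_tensor_def by auto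
        then have "d u h = 0" for u unfolding d_def by (simp add: sum.neutral)
        then show ?thesis unfolding sum_app by simp
      qed
    qed
  qed
  have d0: "d u h = 0" if "u \<in> BU" for u h
    using V.independentD[OF BU(1) BU(2) subset_refl dz that] .
  have "(\<Sum>w\<in>BW. fsc (c (u,w)) w) = 0" if "u \<in> BU" for u
  proof (rule ext)
    fix h show "(\<Sum>w\<in>BW. fsc (c (u,w)) w) h = 0 h"
      using d0[OF that, of h] unfolding sum_app d_def by simp
  qed
  then have "c (u,w) = 0" if "u \<in> BU" "w \<in> BW" for u w
    using V.independentD[OF BW(1) BW(2) subset_refl _ that(2), of "\<lambda>w. c (u,w)"] that by blast
  then show "c x = 0" using x by (cases x) auto
qed

lemma prod_dim:
  assumes dj: "A \<inter> B = {}" and fA: "finite A" and fB: "finite B"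
    and U: "V.subspace U" "U \<subseteq> {P. is_tensor \<kappa> A P}" and W: "V.subspace W" "W \<subseteq> {P. is_tensor \<kappa> B P}"
    and M: "M = {P. is_tensor \<kappa> (A \<union> B) P \<and> (\<forall>h. slc \<kappa> A B P h \<in> U) \<and> (\<forall>g. slc \<kappa> B A P g \<in> W)}"
  shows "V.dim M = V.dim U * V.dim W"
proof -
  obtain BU where BU: "BU \<subseteq> U" "V.independent BU" "U \<subseteq> V.span BU" "card BU = V.dim U" "finite BU"
    using fin_basis[OF U(2) fA] by blast
  obtain BW where BW: "BW \<subseteq> W" "V.independent BW" "W \<subseteq> V.span BW" "card BW = V.dim W" "finite BW"
    using fin_basis[OF W(2) fB] by blast
  define tp' where "tp' x = tp \<kappa> A B (fst x) (snd x)" for x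
  define I where "I = BU \<times> BW"
  have finI: "finite I" using BU(5) BW(5) by (simp add: I_def)
  have BUt: "BU \<subseteq> {P. is_tensor \<kappa> A P}" using BU(1) U(2) by blast
  have BWt: "BW \<subseteq> {P. is_tensor \<kappa> B P}" using BW(1) W(2) by blast
  have coeff: "\<forall>i\<in>I. c i = 0" if "(\<Sum>i\<in>I. fsc (c i) (tp' i)) = 0" for c
    using prod_coeff[OF dj fA fB BU(2) BU(5) BUt BW(2) BW(5) BWt, of c] that by (simp add: I_def tp'_def)
  note fam = family_indep[where v=tp', OF finI coeff]
  have sub: "tp' ` I \<subseteq> M"
  proof
    fix y assume "y \<in> tp' ` I"
    then obtain u w where uw: "u \<in> BU" "w \<in> BW" "y = tp \<kappa> A B u w" by (auto simp: I_def tp'_def)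
    have ut: "is_tensor \<kappa> A u" "is_tensor \<kappa> B w" using uw BUt BWt by auto
    have "slc \<kappa> A B y h \<in> U" for h
      unfolding uw(3) slc_tp_A[OF dj ut] using V.subspace_scale[OF U(1)] uw BU(1) by blast
    moreover have "slc \<kappa> B A y g \<in> W" for g
      unfolding uw(3) slc_tp_B[OF dj ut] using V.subspace_scale[OF W(1)] uw BW(1) by blast
    ultimately show "y \<in> M" unfolding M using uw(3) tp_tensor by blast
  qed
  obtain B' where B': "BU \<subseteq> B'" "B' \<subseteq> {P. is_tensor \<kappa> A P}" "V.independent B'" "{P. is_tensor \<kappa> A P} \<subseteq> V.span B'"
    using V.maximal_independent_subset_extend[OF BUt BU(2)] by blast
  have span: "M \<subseteq> V.span (tp' ` I)"
  proof
    fix P assume P: "P \<in> M"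
    have PT: "is_tensor \<kappa> (A \<union> B) P" and PU: "\<And>h. slc \<kappa> A B P h \<in> U" and PW: "\<And>g. slc \<kappa> B A P g \<in> W"
      using P unfolding M by blast+
    define c where "c u = (\<lambda>h. V.representation B' (slc \<kappa> A B P h) u)" for u
    have c1: "slc \<kappa> A B P h = (\<Sum>u\<in>BU. fsc (c u h) u)" for h
    proof -
      have sp: "slc \<kappa> A B P h \<in> V.span BU" using PU BU(3) by blast
      have "V.representation B' (slc \<kappa> A B P h) = V.representation BU (slc \<kappa> A B P h)"
        by (rule V.representation_extend[OF B'(3) sp B'(1)])
      then show ?thesis unfolding c_def using V.sum_representation_eq[OF BU(2) sp BU(5) subset_refl] by simp
    qed
    have c2: "c u \<in> W" for u
    proof -
      have indsp: "ind g \<in> V.span B'" if "g \<in> indices \<kappa> A" for g using B'(4) ind_tensor[OF that] by blast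
      have dec: "slc \<kappa> A B P h = (\<Sum>g\<in>indices \<kappa> A. fsc (slc \<kappa> B A P g h) (ind g))" for h
      proof -
        have "is_tensor \<kappa> A (slc \<kappa> A B P h)" unfolding is_tensor_def slc_def by simp
        from tensor_decomp[OF this fA] show ?thesis by (simp add: slc_comm[OF dj])
      qed
      have "c u h = (\<Sum>g\<in>indices \<kappa> A. slc \<kappa> B A P g h * V.representation B' (ind g) u)" for h
        unfolding c_def dec[of h]
        by (simp add: V.representation_sum[OF B'(3)] V.span_scale indsp V.representation_scale[OF B'(3)])
      then have "c u = (\<Sum>g\<in>indices \<kappa> A. fsc (V.representation B' (ind g) u) (slc \<kappa> B A P g))"
        by (intro ext) (simp add: sum_app mult.commute)
      also have "\<dots> \<in> W" by (intro V.subspace_sum[OF W(1)] V.subspace_scale[OF W(1)] PW)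
      finally show ?thesis .
    qed
    have c3: "P = (\<Sum>u\<in>BU. tp \<kappa> A B u (c u))"
    proof (rule ext)
      fix f
      show "P f = (\<Sum>u\<in>BU. tp \<kappa> A B u (c u)) f"
      proof (cases "f \<in> indices \<kappa> (A \<union> B)")
        case True
        define g h where "g = restrict f A" and "h = restrict f B"
        have gh: "g \<in> indices \<kappa> A" "h \<in> indices \<kappa> B" using True restrict_in unfolding g_def h_def by blast+
        have f: "f = mrg A g h" using mrg_restrict[OF True] by (simp add: g_def h_def)
        have "P f = slc \<kappa> A B P h g" using gh f by (simp add: slc_def)
        also have "\<dots> = (\<Sum>u\<in>BU. c u h * u g)" unfolding c1[of h] sum_app by simp
        also have "\<dots> = (\<Sum>u\<in>BU. tp \<kappa> A B u (c u)) f" unfolding sum_app using True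
          by (simp add: tp_def g_def h_def mult.commute)
        finally show ?thesis .
      next
        case False
        then show ?thesis using PT unfolding is_tensor_def sum_app by (simp add: tp_def)
      qed
    qed
    have c4: "tp \<kappa> A B u q \<in> V.span (tp' ` I)" if "u \<in> BU" "q \<in> W" for u q
    proof -
      have sp: "q \<in> V.span BW" using that BW(3) by blast
      have "tp \<kappa> A B u q = tp \<kappa> A B u (\<Sum>w\<in>BW. fsc (V.representation BW q w) w)"
        using V.sum_representation_eq[OF BW(2) sp BW(5) subset_refl] by simp
      also have "\<dots> = (\<Sum>w\<in>BW. fsc (V.representation BW q w) (tp \<kappa> A B u w))" by (rule tp_lin2)
      also have "\<dots> \<in> V.span (tp' ` I)"
      proof (intro V.span_sum V.span_scale V.span_base)
        fix w assume "w \<in> BW"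
        then have "(u, w) \<in> I" using that by (simp add: I_def)
        then show "tp \<kappa> A B u w \<in> tp' ` I" unfolding tp'_def by force
      qed
      finally show ?thesis .
    qed
    have "(\<Sum>u\<in>BU. tp \<kappa> A B u (c u)) \<in> V.span (tp' ` I)"
      by (intro V.span_sum c4 c2)
    then show "P \<in> V.span (tp' ` I)" by (subst c3)
  qed
  have "card (tp' ` I) = V.dim M" by (rule V.basis_card_eq_dim[OF sub span fam(2)])
  then show ?thesis using fam(3) BU(4) BW(4) by (simp add: I_def card_cartesian_product)
qed



definition cst :: "'a set \<Rightarrow> nat \<Rightarrow> 'a \<Rightarrow> nat" where "cst S s = restrict (\<lambda>_. s) S"

lemma cst_in: "s < \<kappa> \<Longrightarrow> cst S s \<in> indices \<kappa> S" unfolding cst_def indices_def by auto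
lemma restrict_cst: "Y \<subseteq> S \<Longrightarrow> restrict (cst S s) Y = cst Y s" unfolding cst_def by (auto simp: fun_eq_iff restrict_def)
lemma swap_cst: "a \<in> Y \<Longrightarrow> b \<in> Y \<Longrightarrow> swap_idx a b (cst Y s) = cst Y s" unfolding cst_def swap_idx_def by (auto simp: fun_eq_iff)

lemma marg_ind:
  assumes "finite X" "Y \<subseteq> X" "p \<in> indices \<kappa> X"
  shows "marg \<kappa> X Y (ind p) f = (if f \<in> indices \<kappa> Y \<and> restrict p Y = f then 1 else 0)"
proof (cases "f \<in> indices \<kappa> Y")
  case True
  have "marg \<kappa> X Y (ind p) f = (\<Sum>F\<in>indices \<kappa> X. if restrict F Y = f then ind p F else 0)" by (rule marg_alt[OF assms(1,2) True])
  also have "\<dots> = (\<Sum>F\<in>indices \<kappa> X. if F = p then (if restrict F Y = f then 1 else 0) else 0)"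
    by (intro sum.cong refl) (auto simp: ind_def)
  also have "\<dots> = (if restrict p Y = f then 1 else 0)" using assms(3) assms(1) by (simp add: indices_finite)
  finally show ?thesis using True by simp
next
  case False then show ?thesis by (simp add: marg_def)
qed

lemma cst_L:
  assumes "s < \<kappa>"
  shows "ind (cst (taxa t) s) \<in> Lspace \<kappa> t"
proof (rule L_intro)
  fix f assume "f \<notin> indices \<kappa> (taxa t)"
  then show "ind (cst (taxa t) s) f = 0" using cst_in[OF assms] by (auto simp: ind_def)
next
  fix Y t' a b f assume Y: "Y \<subseteq> taxa t" and r: "restrict_tree t Y = Some t'" and c: "two_clade t' a b"
  have ab: "a \<in> Y" "b \<in> Y" using two_clade_taxa[OF c] restrict_taxa[OF r] by auto
  have e: "cst Y s = swap_idx a b f \<longleftrightarrow> cst Y s = f"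
  proof
    assume "cst Y s = swap_idx a b f"
    then have "swap_idx a b (cst Y s) = f" using swap_swap by metis
    then show "cst Y s = f" using swap_cst[OF ab] by simp
  next
    assume "cst Y s = f" then show "cst Y s = swap_idx a b f" using swap_cst[OF ab, of s] by metis
  qed
  show "marg \<kappa> (taxa t) Y (ind (cst (taxa t) s)) (swap_idx a b f) = marg \<kappa> (taxa t) Y (ind (cst (taxa t) s)) f"
    unfolding marg_ind[OF taxa_finite Y cst_in[OF assms]] restrict_cst[OF Y] using e swap_in[OF ab] by simp
qed

lemma tp_ind:
  assumes dj: "A \<inter> B = {}" and p: "p \<in> indices \<kappa> A" and q: "q \<in> indices \<kappa> B"
  shows "tp \<kappa> A B (ind p) (ind q) = ind (mrg A p q)"
proof (rule ext)
  fix f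
  show "tp \<kappa> A B (ind p) (ind q) f = ind (mrg A p q) f"
  proof (cases "f \<in> indices \<kappa> (A \<union> B)")
    case True
    have "f = mrg A p q \<longleftrightarrow> restrict f A = p \<and> restrict f B = q"
      using mrg_restrict[OF True] restrict_mrg_A[OF p] restrict_mrg_B[OF dj q] by metis
    then show ?thesis using True by (simp add: tp_def ind_def)
  next
    case False
    then have "f \<noteq> mrg A p q" using mrg_in[OF dj p q] by blast
    then show ?thesis using False by (simp add: tp_def ind_def)
  qed
qed

lemma m2_ind:
  assumes "finite X" "P0 \<in> indices \<kappa> X"
  shows "m2 \<kappa> X (ind P0) a b i j = (if P0 a = i \<and> P0 b = j then 1 else 0)"
proof -
  have "m2 \<kappa> X (ind P0) a b i j = (\<Sum>F\<in>indices \<kappa> X. if F = P0 then (if F a = i \<and> F b = j then 1 else 0) else 0)"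
    unfolding m2_def by (intro sum.cong refl) (auto simp: ind_def)
  also have "\<dots> = (if P0 a = i \<and> P0 b = j then 1 else 0)" using assms by (simp add: indices_finite)
  finally show ?thesis .
qed

lemma m2_diff: "m2 \<kappa> X (P - Q) a b i j = m2 \<kappa> X P a b i j - m2 \<kappa> X Q a b i j"
  unfolding m2_def sum_subtractf[symmetric] by (intro sum.cong refl) simp
lemma m2_add: "m2 \<kappa> X (P + Q) a b i j = m2 \<kappa> X P a b i j + m2 \<kappa> X Q a b i j"
  unfolding m2_def sum.distrib[symmetric] by (intro sum.cong refl) simp
lemma m2_fsc: "m2 \<kappa> X (fsc c P) a b i j = c * m2 \<kappa> X P a b i j"
  unfolding m2_def sum_distrib_left by (intro sum.cong refl) simp
lemma m2_zero: "m2 \<kappa> X 0 a b i j = 0"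
  unfolding m2_def zero_fun_def by simp
lemma m2_sum: "m2 \<kappa> X (\<Sum>x\<in>S. fsc (c x) (F x)) a b i j = (\<Sum>x\<in>S. c x * m2 \<kappa> X (F x) a b i j)"
proof -
  have "m2 \<kappa> X (\<Sum>x\<in>S. fsc (c x) (F x)) a b i j = (\<Sum>f\<in>indices \<kappa> X. \<Sum>x\<in>S. c x * (if f a = i \<and> f b = j then F x f else 0))"
    unfolding m2_def sum_app
  proof (intro sum.cong refl)
    fix f show "(if f a = i \<and> f b = j then \<Sum>x\<in>S. fsc (c x) (F x) f else 0) = (\<Sum>x\<in>S. c x * (if f a = i \<and> f b = j then F x f else 0))"
    proof (cases "f a = i \<and> f b = j")
      case False
      then have "\<forall>x\<in>S. c x * (if f a = i \<and> f b = j then F x f else 0) = 0" by auto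
      then show ?thesis using False by (simp only: sum.neutral if_False)
    qed simp
  qed
  also have "\<dots> = (\<Sum>x\<in>S. c x * m2 \<kappa> X (F x) a b i j)"
    unfolding m2_def sum_distrib_left by (rule sum.swap)
  finally show ?thesis .
qed

definition Ep :: "nat \<Rightarrow> 'a set \<Rightarrow> 'a set \<Rightarrow> nat \<times> nat \<Rightarrow> (('a \<Rightarrow> nat) \<Rightarrow> real)" where
  "Ep \<kappa> A B x = tp \<kappa> A B (ind (cst A (fst x))) (ind (cst B (snd x))) - tp \<kappa> A B (ind (cst A (snd x))) (ind (cst B (fst x)))"

definition Pr :: "nat \<Rightarrow> (nat \<times> nat) set" where "Pr \<kappa> = {(s,t). s < t \<and> t < \<kappa>}"

lemma Pr_finite: "finite (Pr \<kappa>)"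
  by (rule finite_subset[of _ "{..<\<kappa>} \<times> {..<\<kappa>}"]) (auto simp: Pr_def)

lemma card_Pr: "card (Pr k) = k choose 2"
proof (induct k)
  case 0 show ?case by (simp add: Pr_def)
next
  case (Suc k)
  have eq: "Pr (Suc k) = Pr k \<union> (\<lambda>s. (s,k)) ` {..<k}" by (auto simp: Pr_def)
  have dj: "Pr k \<inter> (\<lambda>s. (s,k)) ` {..<k} = {}" by (auto simp: Pr_def)
  have "card (Pr (Suc k)) = card (Pr k) + card ((\<lambda>s. (s,k)) ` {..<k})"
    unfolding eq by (rule card_Un_disjoint[OF Pr_finite _ dj]) simp
  also have "card ((\<lambda>s. (s,k)) ` {..<k}) = k" by (simp add: card_image inj_on_def)
  finally show ?case using Suc by (simp add: numeral_2_eq_2)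
qed

lemma m2_Ep:
  assumes dj: "A \<inter> B = {}" and fin: "finite A" "finite B" and a0: "a0 \<in> A" and b0: "b0 \<in> B"
    and x: "fst x < \<kappa>" "snd x < \<kappa>"
  shows "m2 \<kappa> (A \<union> B) (Ep \<kappa> A B x) a0 b0 i j = (if x = (i,j) then 1 else 0) - (if x = (j,i) then 1 else 0)"
proof -
  have fX: "finite (A \<union> B)" using fin by simp
  have a0B: "a0 \<notin> B" "b0 \<notin> A" using dj a0 b0 by auto
  have e1: "tp \<kappa> A B (ind (cst A (fst x))) (ind (cst B (snd x))) = ind (mrg A (cst A (fst x)) (cst B (snd x)))"
    by (rule tp_ind[OF dj cst_in[OF x(1)] cst_in[OF x(2)]])
  have e2: "tp \<kappa> A B (ind (cst A (snd x))) (ind (cst B (fst x))) = ind (mrg A (cst A (snd x)) (cst B (fst x)))"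
    by (rule tp_ind[OF dj cst_in[OF x(2)] cst_in[OF x(1)]])
  have i1: "mrg A (cst A (fst x)) (cst B (snd x)) \<in> indices \<kappa> (A \<union> B)" by (rule mrg_in[OF dj cst_in[OF x(1)] cst_in[OF x(2)]])
  have i2: "mrg A (cst A (snd x)) (cst B (fst x)) \<in> indices \<kappa> (A \<union> B)" by (rule mrg_in[OF dj cst_in[OF x(2)] cst_in[OF x(1)]])
  show ?thesis
    unfolding Ep_def m2_diff e1 e2 m2_ind[OF fX i1] m2_ind[OF fX i2]
    using a0 b0 a0B by (cases x) (auto simp: mrg_def cst_def)
qed

lemma m2_comb:
  assumes dj: "A \<inter> B = {}" and fin: "finite A" "finite B" and a0: "a0 \<in> A" and b0: "b0 \<in> B"
  shows "m2 \<kappa> (A \<union> B) (\<Sum>x\<in>Pr \<kappa>. fsc (c x) (Ep \<kappa> A B x)) a0 b0 i j =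
    (if (i,j) \<in> Pr \<kappa> then c (i,j) else 0) - (if (j,i) \<in> Pr \<kappa> then c (j,i) else 0)"
proof -
  have "m2 \<kappa> (A \<union> B) (\<Sum>x\<in>Pr \<kappa>. fsc (c x) (Ep \<kappa> A B x)) a0 b0 i j
      = (\<Sum>x\<in>Pr \<kappa>. (if x = (i,j) then c x else 0) - (if x = (j,i) then c x else 0))"
    unfolding m2_sum
  proof (intro sum.cong refl)
    fix x assume "x \<in> Pr \<kappa>"
    then obtain s t where x: "x = (s,t)" "s < t" "t < \<kappa>" by (auto simp: Pr_def)
    have m: "m2 \<kappa> (A \<union> B) (Ep \<kappa> A B (s,t)) a0 b0 i j = (if (s,t) = (i,j) then 1 else 0) - (if (s,t) = (j,i) then 1 else 0)"
      by (rule m2_Ep[OF dj fin a0 b0]) (use x in simp_all)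
    show "c x * m2 \<kappa> (A \<union> B) (Ep \<kappa> A B x) a0 b0 i j = (if x = (i,j) then c x else 0) - (if x = (j,i) then c x else 0)"
      unfolding x(1) m by (cases "(s,t) = (i,j)"; cases "(s,t) = (j,i)") (simp_all only: simp_thms if_True if_False mult_1_right mult_0_right diff_zero diff_self right_diff_distrib)
  qed
  also have "\<dots> = (if (i,j) \<in> Pr \<kappa> then c (i,j) else 0) - (if (j,i) \<in> Pr \<kappa> then c (j,i) else 0)"
    by (simp add: sum_subtractf Pr_finite)
  finally show ?thesis .
qed



lemma count_main:
  assumes dj: "A \<inter> B = {}" and fin: "finite A" "finite B" and a0: "a0 \<in> A" and b0: "b0 \<in> B"
    and Msub: "V.subspace M" and Mt: "M \<subseteq> {P. is_tensor \<kappa> (A \<union> B) P}"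
    and L: "L = {P \<in> M. \<forall>s<\<kappa>. \<forall>t<\<kappa>. m2 \<kappa> (A \<union> B) P a0 b0 s t = m2 \<kappa> (A \<union> B) P a0 b0 t s}"
    and EM: "\<And>x. x \<in> Pr \<kappa> \<Longrightarrow> Ep \<kappa> A B x \<in> M"
  shows "V.dim L + (\<kappa> choose 2) = V.dim M"
proof -
  let ?X = "A \<union> B"
  have finX: "finite ?X" using fin by simp
  have Lsub: "V.subspace L"
  proof (unfold V.subspace_def, intro conjI ballI allI)
    show "0 \<in> L" unfolding L using V.subspace_0[OF Msub] by (simp add: m2_zero)
  next
    fix x y assume x: "x \<in> L" and y: "y \<in> L"
    have xy: "x \<in> M" "y \<in> M" using x y unfolding L by blast+
    have Rx: "m2 \<kappa> ?X x a0 b0 s t = m2 \<kappa> ?X x a0 b0 t s" if "s < \<kappa>" "t < \<kappa>" for s t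
      using x that unfolding L by blast
    have Ry: "m2 \<kappa> ?X y a0 b0 s t = m2 \<kappa> ?X y a0 b0 t s" if "s < \<kappa>" "t < \<kappa>" for s t
      using y that unfolding L by blast
    have "x + y \<in> M" using V.subspace_add[OF Msub xy] .
    moreover have "\<forall>s<\<kappa>. \<forall>t<\<kappa>. m2 \<kappa> ?X (x + y) a0 b0 s t = m2 \<kappa> ?X (x + y) a0 b0 t s"
      unfolding m2_add using Rx Ry by simp
    ultimately show "x + y \<in> L" unfolding L by blast
  next
    fix c x assume x: "x \<in> L"
    have xM: "x \<in> M" using x unfolding L by blast
    have Rx: "m2 \<kappa> ?X x a0 b0 s t = m2 \<kappa> ?X x a0 b0 t s" if "s < \<kappa>" "t < \<kappa>" for s t
      using x that unfolding L by blast
    have "fsc c x \<in> M" using V.subspace_scale[OF Msub xM] .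
    moreover have "\<forall>s<\<kappa>. \<forall>t<\<kappa>. m2 \<kappa> ?X (fsc c x) a0 b0 s t = m2 \<kappa> ?X (fsc c x) a0 b0 t s"
      unfolding m2_fsc using Rx by simp
    ultimately show "fsc c x \<in> L" unfolding L by blast
  qed
  have LM: "L \<subseteq> M" unfolding L by blast
  have Lt: "L \<subseteq> {P. is_tensor \<kappa> ?X P}" using LM Mt by blast
  obtain BL where BL: "BL \<subseteq> L" "V.independent BL" "L \<subseteq> V.span BL" "card BL = V.dim L" "finite BL"
    using fin_basis[OF Lt finX] by blast
  define Es where "Es = Ep \<kappa> A B ` Pr \<kappa>"
  have coeffE: "\<forall>x\<in>Pr \<kappa>. c x = 0" if "(\<Sum>x\<in>Pr \<kappa>. fsc (c x) (Ep \<kappa> A B x)) = 0" for c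
  proof
    fix x assume x: "x \<in> Pr \<kappa>"
    then obtain i j where ij: "x = (i,j)" "i < j" "j < \<kappa>" by (auto simp: Pr_def)
    have "m2 \<kappa> ?X (\<Sum>x\<in>Pr \<kappa>. fsc (c x) (Ep \<kappa> A B x)) a0 b0 i j = c (i,j)"
      unfolding m2_comb[OF dj fin a0 b0] using ij by (simp add: Pr_def)
    then show "c x = 0" using that ij by (simp add: m2_zero)
  qed
  note famE = family_indep[where v="Ep \<kappa> A B", OF Pr_finite coeffE]
  have finEs: "finite Es" unfolding Es_def using Pr_finite by simp
  have F3: "V.span BL \<inter> V.span Es \<subseteq> {0}"
  proof
    fix x assume x: "x \<in> V.span BL \<inter> V.span Es"
    have xL: "x \<in> L" using x V.span_minimal[OF BL(1) Lsub] by blast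
    obtain r where xr: "x = (\<Sum>v\<in>Es. fsc (r v) v)" using x V.span_finite[OF finEs] by auto
    define c where "c p = r (Ep \<kappa> A B p)" for p
    have xr': "x = (\<Sum>p\<in>Pr \<kappa>. fsc (c p) (Ep \<kappa> A B p))"
      unfolding xr Es_def c_def by (simp add: sum.reindex[OF famE(1)])
    have R: "m2 \<kappa> ?X x a0 b0 s t = m2 \<kappa> ?X x a0 b0 t s" if "s < \<kappa>" "t < \<kappa>" for s t
      using xL that unfolding L by blast
    have c0: "c p = 0" if pP: "p \<in> Pr \<kappa>" for p
    proof -
      obtain i j where p: "p = (i,j)" "i < j" "j < \<kappa>" using pP by (auto simp: Pr_def)
      have "m2 \<kappa> ?X x a0 b0 i j = m2 \<kappa> ?X x a0 b0 j i" using R p by auto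
      moreover have "m2 \<kappa> ?X x a0 b0 i j = c (i,j)"
        unfolding xr' m2_comb[OF dj fin a0 b0] using p by (simp add: Pr_def)
      moreover have "m2 \<kappa> ?X x a0 b0 j i = - c (i,j)"
        unfolding xr' m2_comb[OF dj fin a0 b0] using p by (simp add: Pr_def)
      ultimately show "c p = 0" using p by simp
    qed
    have "x = 0" unfolding xr' by (intro sum.neutral ballI) (simp add: c0)
    then show "x \<in> {0}" by simp
  qed
  have F4: "M \<subseteq> V.span (BL \<union> Es)"
  proof
    fix P assume P: "P \<in> M"
    define \<alpha> where "\<alpha> p = (m2 \<kappa> ?X P a0 b0 (fst p) (snd p) - m2 \<kappa> ?X P a0 b0 (snd p) (fst p)) / 2" for p
    define Q where "Q = (\<Sum>p\<in>Pr \<kappa>. fsc (\<alpha> p) (Ep \<kappa> A B p))"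
    have QM: "Q \<in> M" unfolding Q_def by (intro V.subspace_sum[OF Msub] V.subspace_scale[OF Msub] EM)
    have QS: "Q \<in> V.span (BL \<union> Es)" unfolding Q_def by (intro V.span_sum V.span_scale V.span_base) (auto simp: Es_def)
    have mQ: "m2 \<kappa> ?X Q a0 b0 i j = (if (i,j) \<in> Pr \<kappa> then \<alpha> (i,j) else 0) - (if (j,i) \<in> Pr \<kappa> then \<alpha> (j,i) else 0)" for i j
      unfolding Q_def by (rule m2_comb[OF dj fin a0 b0])
    have "P - Q \<in> L"
    proof -
      have "P - Q \<in> M" using V.subspace_diff[OF Msub P QM] .
      moreover have "\<forall>s<\<kappa>. \<forall>t<\<kappa>. m2 \<kappa> ?X (P - Q) a0 b0 s t = m2 \<kappa> ?X (P - Q) a0 b0 t s"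
      proof (intro allI impI)
        fix i j assume ij: "i < \<kappa>" "j < \<kappa>"
        show "m2 \<kappa> ?X (P - Q) a0 b0 i j = m2 \<kappa> ?X (P - Q) a0 b0 j i"
          unfolding m2_diff mQ using ij by (cases i j rule: linorder_cases) (simp_all add: Pr_def \<alpha>_def field_simps)
      qed
      ultimately show ?thesis unfolding L by blast
    qed
    then have "P - Q \<in> V.span BL" using BL(3) by blast
    then have "P - Q \<in> V.span (BL \<union> Es)" using V.span_mono[of BL "BL \<union> Es"] by blast
    then have "(P - Q) + Q \<in> V.span (BL \<union> Es)" using QS V.span_add by blast
    then show "P \<in> V.span (BL \<union> Es)" by simp
  qed
  have EsM: "Es \<subseteq> M" unfolding Es_def using EM by blast
  have iE: "V.independent Es" using famE(2) unfolding Es_def .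
  note U = indep_union[OF BL(2) iE BL(5) finEs F3]
  have sub: "BL \<union> Es \<subseteq> M" using BL(1) LM EsM by blast
  have "card (BL \<union> Es) = V.dim M" by (rule V.basis_card_eq_dim[OF sub F4 U(1)])
  moreover have "card (BL \<union> Es) = card BL + card Es" by (rule card_Un_disjoint[OF BL(5) finEs U(2)])
  moreover have "card Es = \<kappa> choose 2" unfolding Es_def using famE(3) card_Pr by simp
  ultimately show ?thesis using BL(4) by simp
qed

lemma tp_Mset:
  assumes wf: "wf_tree (Node tA tB)" and u: "u \<in> Lspace \<kappa> tA" and w: "w \<in> Lspace \<kappa> tB"
  shows "tp \<kappa> (taxa tA) (taxa tB) u w \<in> Mset \<kappa> tA tB"
proof -
  have dj: "taxa tA \<inter> taxa tB = {}" using wf by (simp add: wf_Node)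
  have ut: "is_tensor \<kappa> (taxa tA) u" "is_tensor \<kappa> (taxa tB) w"
    using L_tensor[OF u] L_tensor[OF w] unfolding is_tensor_def by blast+
  have "slc \<kappa> (taxa tA) (taxa tB) (tp \<kappa> (taxa tA) (taxa tB) u w) h \<in> Lspace \<kappa> tA" for h
    unfolding slc_tp_A[OF dj ut] by (rule V.subspace_scale[OF Lspace_subspace u])
  moreover have "slc \<kappa> (taxa tB) (taxa tA) (tp \<kappa> (taxa tA) (taxa tB) u w) g \<in> Lspace \<kappa> tB" for g
    unfolding slc_tp_B[OF dj ut] by (rule V.subspace_scale[OF Lspace_subspace w])
  ultimately show ?thesis unfolding Mset_def using tp_tensor by blast
qed

theorem theorem4p1:
  fixes \<kappa> :: nat and tA tB :: "'a rtree"
  assumes "\<kappa> \<ge> 2"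
    and "wf_tree (Node tA tB)"
  shows "int (c_dim \<kappa> (Node tA tB)) = int (c_dim \<kappa> tA) * int (c_dim \<kappa> tB) - int (\<kappa> choose 2)"
proof -
  have wl: "wf_tree tA" "wf_tree tB" "taxa tA \<inter> taxa tB = {}" using assms(2) by (simp_all add: wf_Node)
  obtain a0 where a0: "a0 \<in> taxa tA" using taxa_ne by (metis ex_in_conv)
  obtain b0 where b0: "b0 \<in> taxa tB" using taxa_ne by (metis ex_in_conv)
  have LtA: "Lspace \<kappa> tA \<subseteq> {P. is_tensor \<kappa> (taxa tA) P}" using L_tensor unfolding is_tensor_def by blast
  have LtB: "Lspace \<kappa> tB \<subseteq> {P. is_tensor \<kappa> (taxa tB) P}" using L_tensor unfolding is_tensor_def by blast
  have pd: "V.dim (Mset \<kappa> tA tB) = V.dim (Lspace \<kappa> tA) * V.dim (Lspace \<kappa> tB)"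
    by (rule prod_dim[OF wl(3) taxa_finite taxa_finite Lspace_subspace LtA Lspace_subspace LtB]) (simp add: Mset_def)
  have Lchar: "Lspace \<kappa> (Node tA tB) = {P \<in> Mset \<kappa> tA tB. \<forall>s<\<kappa>. \<forall>t<\<kappa>.
      m2 \<kappa> (taxa tA \<union> taxa tB) P a0 b0 s t = m2 \<kappa> (taxa tA \<union> taxa tB) P a0 b0 t s}"
    by (rule set_eqI) (simp only: L_char[OF assms(2) a0 b0] Mset_def mem_Collect_eq conj_assoc)
  have MT: "Mset \<kappa> tA tB \<subseteq> {P. is_tensor \<kappa> (taxa tA \<union> taxa tB) P}" unfolding Mset_def by blast
  have EM: "Ep \<kappa> (taxa tA) (taxa tB) x \<in> Mset \<kappa> tA tB" if "x \<in> Pr \<kappa>" for x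
  proof -
    have st: "fst x < \<kappa>" "snd x < \<kappa>" using that by (auto simp: Pr_def)
    show ?thesis unfolding Ep_def
      by (intro V.subspace_diff[OF Mset_subspace] tp_Mset[OF assms(2)] cst_L st)
  qed
  have cm: "V.dim (Lspace \<kappa> (Node tA tB)) + (\<kappa> choose 2) = V.dim (Mset \<kappa> tA tB)"
    by (rule count_main[OF wl(3) taxa_finite taxa_finite a0 b0 Mset_subspace MT Lchar EM])
  have "int (c_dim \<kappa> (Node tA tB)) + int (\<kappa> choose 2) = int (c_dim \<kappa> tA) * int (c_dim \<kappa> tB)"
    using cm pd unfolding c_dim_V by (metis of_nat_add of_nat_mult)
  then show ?thesis by linarith
qed


end
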